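(* Suppose the weight function $w$ satisfies $0<m\le w\le M$ almost everywhere. Then for every $n\ge1$ and each $1\le i\le n$, $$\frac mM(1-\xi_i^u(0))\le1-\xi_i^w(0)\le\frac Mm(1-\xi_i^u(0))\quad\text{and}\quad\frac mM(1+\xi_i^u(0))\le1+\xi_i^w(0)\le\frac Mm(1+\xi_i^u(0)).$$ Consequently there exist absolute constants $C,c>0$ such that for all $n\ge1$ and $1\le i\le n$, $$c\sqrt{\tfrac mM}\cdot\frac{n+1-i}{n}\le\sqrt{1-\xi_i^w(0)}\le C\sqrt{\tfrac Mm}\cdot\frac{n+1-i}n,\qquad c\sqrt{\tfrac mM}\cdot\frac in\le\sqrt{1+\xi_i^w(0)}\le C\sqrt{\tfrac Mm}\cdot\frac in.$$
   Context: A weight function is a non-negative integrable function on $[-1,1]$ with nonzero integral. For a weight function $v$ and $n\ge1$, $\xi_1^v(0)<\dots<\xi_n^v(0)$ denote the zeros of the degree-$n$ orthogonal polynomial with respect to $v(t)\,dt$ on $[-1,1]$. Here $u\equiv1$ is the constant weight, so $\xi_i^u(0)$ are the zeros of the Legendre polynomial $L_n(t)=\frac{1}{2^nn!}\frac{d^n}{dt^n}[(t^2-1)^n]$. *)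

theory Defs
  imports "HOL-Analysis.Analysis" "HOL-Computational_Algebra.Polynomial"
begin

definition weight_fn :: "(real \<Rightarrow> real) \<Rightarrow> bool" where
  "weight_fn v \<longleftrightarrow> (\<forall>t\<in>{-1..1}. 0 \<le> v t) \<and> v integrable_on {-1..1}
      \<and> integral {-1..1} v \<noteq> 0"

definition orth_poly :: "(real \<Rightarrow> real) \<Rightarrow> nat \<Rightarrow> real poly \<Rightarrow> bool" where
  "orth_poly v n p \<longleftrightarrow> degree p = n \<and> lead_coeff p = 1 \<and>
     (\<forall>q::real poly. degree q < n \<longrightarrow>
        integral {-1..1} (\<lambda>t. poly p t * poly q t * v t) = 0)"

definition xi :: "(real \<Rightarrow> real) \<Rightarrow> nat \<Rightarrow> nat \<Rightarrow> real" where
  "xi v n i = sorted_list_of_set {t::real. poly (THE p. orth_poly v n p) t = 0} ! (i - 1)"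

definition bounded_weight :: "(real \<Rightarrow> real) \<Rightarrow> real \<Rightarrow> real \<Rightarrow> bool" where
  "bounded_weight w m M \<longleftrightarrow> weight_fn w \<and> 0 < m \<and>
     (AE t in lebesgue. t \<in> {-1..1} \<longrightarrow> m \<le> w t \<and> w t \<le> M)"

end

theory Submission
  imports Defs
begin

definition lin :: "(real poly \<Rightarrow> real) \<Rightarrow> bool" where
  "lin L \<longleftrightarrow> (\<forall>f g. L (f + g) = L f + L g) \<and> (\<forall>c f. L (smult c f) = c * L f)"

definition posd :: "(real poly \<Rightarrow> real) \<Rightarrow> bool" where
  "posd L \<longleftrightarrow> (\<forall>f. f \<noteq> 0 \<longrightarrow> L (f * f) > 0)"

definition orthp :: "(real poly \<Rightarrow> real) \<Rightarrow> nat \<Rightarrow> real poly \<Rightarrow> bool" where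
  "orthp L n p \<longleftrightarrow> degree p = n \<and> (\<forall>q. degree q < n \<longrightarrow> L (p * q) = 0)"

lemma lin_add: "lin L \<Longrightarrow> L (f + g) = L f + L g" by (simp add: lin_def)
lemma lin_smult: "lin L \<Longrightarrow> L (smult c f) = c * L f" by (simp add: lin_def)
lemma lin_zero: "lin L \<Longrightarrow> L 0 = 0"
  using lin_smult[of L 0 0] by simp
lemma lin_uminus: "lin L \<Longrightarrow> L (- f) = - L f"
  using lin_smult[of L "-1" f] by simp
lemma lin_diff: "lin L \<Longrightarrow> L (f - g) = L f - L g"
  using lin_add[of L f "-g"] lin_uminus[of L g] by simp
lemma lin_sum: "lin L \<Longrightarrow> L (\<Sum>j\<in>A. f j) = (\<Sum>j\<in>A. L (f j))"
  by (induction A rule: infinite_finite_induct) (auto simp: lin_zero lin_add)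

lemma span_orth:
  assumes L: "lin L" and P: "\<And>j. j < n \<Longrightarrow> P j \<noteq> 0 \<and> degree (P j) = j"
    and o: "\<And>j. j < n \<Longrightarrow> L (p * P j) = 0"
  shows "degree q < n \<Longrightarrow> L (p * q) = 0"
proof (induction "degree q" arbitrary: q rule: less_induct)
  case less
  define d where "d = degree q"
  define c where "c = lead_coeff q / lead_coeff (P d)"
  define q' where "q' = q - smult c (P d)"
  have Pd: "P d \<noteq> 0" "degree (P d) = d" using P less d_def by auto
  have lcP: "lead_coeff (P d) \<noteq> 0" using Pd(1) by (rule leading_coeff_neq_0)
  have cq': "coeff q' d = 0" using lcP Pd unfolding q'_def c_def d_def by simp
  have dq': "degree q' \<le> d"
  proof -
    have "degree (smult c (P d)) \<le> d" using Pd by simp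
    moreover have "degree q \<le> d" using d_def by simp
    ultimately show ?thesis unfolding q'_def by (rule degree_diff_le[rotated])
  qed
  have "q = q' + smult c (P d)" unfolding q'_def by simp
  hence "L (p * q) = L (p * q') + c * L (p * P d)"
    using L by (simp add: distrib_left lin_add lin_smult mult_smult_right)
  also have "L (p * P d) = 0" using o less d_def by auto
  also have "L (p * q') = 0"
  proof (cases "q' = 0")
    case True thus ?thesis using L by (simp add: lin_zero)
  next
    case False
    have "degree q' \<noteq> d"
    proof
      assume "degree q' = d" hence "lead_coeff q' = 0" using cq' by simp
      thus False using False by simp
    qed
    hence "degree q' < degree q" using dq' d_def by simp
    thus ?thesis using less by simp
  qed
  finally show ?case by simp
qed

function gs :: "(real poly \<Rightarrow> real) \<Rightarrow> nat \<Rightarrow> real poly" where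
  "gs L n = monom 1 n - (\<Sum>j<n. smult (L (monom 1 n * gs L j) / L (gs L j * gs L j)) (gs L j))"
  by auto
termination by (relation "Wellfounded.measure snd") auto

declare gs.simps[simp del]

lemma gs_props:
  assumes L: "lin L" and pos: "posd L"
  shows "degree (gs L n) = n \<and> lead_coeff (gs L n) = 1 \<and> orthp L n (gs L n)"
proof (induction n rule: less_induct)
  case (less n)
  define c where "c j = L (monom 1 n * gs L j) / L (gs L j * gs L j)" for j
  define S where "S = (\<Sum>j<n. smult (c j) (gs L j))"
  have gsn: "gs L n = monom 1 n - S" unfolding S_def c_def by (subst gs.simps) simp
  have cS: "coeff S k = 0" if "k \<ge> n" for k
    unfolding S_def coeff_sum using less that by (auto intro!: sum.neutral coeff_eq_0)
  have co: "coeff (gs L n) n = 1" using cS by (simp add: gsn)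
  have co2: "coeff (gs L n) k = 0" if "k > n" for k using cS that by (simp add: gsn coeff_monom)
  have deg: "degree (gs L n) = n"
    using co co2 by (metis degree_le le_antisym le_degree zero_neq_one)
  have ne: "gs L j \<noteq> 0" "degree (gs L j) = j" if "j < n" for j
  proof -
    have "lead_coeff (gs L j) = 1" "degree (gs L j) = j" using less[OF that] by auto
    thus "gs L j \<noteq> 0" "degree (gs L j) = j" by auto
  qed
  have sym: "L (gs L j * gs L k) = 0" if "j < n" "k < n" "j \<noteq> k" for j k
  proof (cases "j < k")
    case True thus ?thesis using less that unfolding orthp_def by (simp add: mult.commute)
  next
    case False thus ?thesis using less that unfolding orthp_def by simp
  qed
  have o: "L (gs L n * gs L k) = 0" if "k < n" for k
  proof -
    have "gs L n * gs L k = monom 1 n * gs L k - (\<Sum>j<n. smult (c j) (gs L j * gs L k))"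
      by (simp add: gsn S_def left_diff_distrib sum_distrib_right mult_smult_left)
    hence "L (gs L n * gs L k) = L (monom 1 n * gs L k) - (\<Sum>j<n. c j * L (gs L j * gs L k))"
      using L by (simp add: lin_diff lin_sum lin_smult)
    also have "(\<Sum>j<n. c j * L (gs L j * gs L k)) = c k * L (gs L k * gs L k)"
      using that sym by (subst sum.remove[of _ k]) (auto intro!: sum.neutral)
    also have "\<dots> = L (monom 1 n * gs L k)"
      using pos ne[OF that] unfolding c_def posd_def by (simp add: less_imp_neq[symmetric])
    finally show ?thesis by simp
  qed
  have "orthp L n (gs L n)"
  proof -
    have "L (gs L n * q) = 0" if "degree q < n" for q
      by (rule span_orth[of L n "gs L" "gs L n" q]) (use L ne o that in auto)
    thus ?thesis unfolding orthp_def using deg by blast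
  qed
  thus ?case using deg co by simp
qed

lemma orth_unique:
  assumes L: "lin L" and pos: "posd L"
    and p: "orthp L n p" "lead_coeff p = 1" and q: "orthp L n q" "lead_coeff q = 1"
  shows "p = q"
proof (rule ccontr)
  assume ne: "p \<noteq> q"
  define d where "d = p - q"
  have "d \<noteq> 0" using ne d_def by simp
  have "coeff d k = 0" if "k \<ge> n" for k
  proof (cases "k = n")
    case True thus ?thesis using p q unfolding d_def orthp_def by simp
  next
    case False hence "degree p < k" "degree q < k" using p q that unfolding orthp_def by auto
    thus ?thesis unfolding d_def by (simp add: coeff_eq_0)
  qed
  hence "degree d < n"
    using \<open>d \<noteq> 0\<close> by (metis leading_coeff_0_iff not_le)
  hence "L (p * d) = 0" "L (q * d) = 0" using p q unfolding orthp_def by auto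
  hence "L (d * d) = 0" unfolding d_def using L by (simp add: left_diff_distrib lin_diff)
  thus False using pos \<open>d \<noteq> 0\<close> unfolding posd_def by force
qed

definition spos :: "(real poly \<Rightarrow> real) \<Rightarrow> bool" where
  "spos L \<longleftrightarrow> (\<forall>f. f \<noteq> 0 \<longrightarrow> (\<forall>x\<in>{-1..1}. poly f x \<ge> 0) \<longrightarrow> L f > 0)"

lemma even_sign:
  fixes f :: "real poly"
  assumes "f \<noteq> 0" "\<And>a. a \<in> {-1<..<1} \<Longrightarrow> poly f a = 0 \<Longrightarrow> even (order a f)"
  shows "(\<forall>x\<in>{-1..1}. poly f x \<ge> 0) \<or> (\<forall>x\<in>{-1..1}. poly f x \<le> 0)"
  using assms
proof (induction "degree f" arbitrary: f rule: less_induct)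
  case (less f)
  show ?case
  proof (cases "\<exists>a\<in>{-1<..<1}. poly f a = 0")
    case True
    then obtain a where a: "a \<in> {-1<..<1}" "poly f a = 0" by blast
    have "order a f \<noteq> 0" using a less.prems(1) order_root by blast
    moreover have "even (order a f)" using less.prems(2) a by blast
    ultimately have "2 \<le> order a f" by presburger
    hence "[:-a,1:]^2 dvd f" using order_divides by blast
    then obtain g where g: "f = [:-a,1:]^2 * g" by (auto simp: dvd_def)
    have g0: "g \<noteq> 0" using g less.prems(1) by auto
    have degf: "degree f = 2 + degree g" using g g0 by (simp add: degree_mult_eq degree_power_eq)
    have "even (order b g)" if b: "b \<in> {-1<..<1}" "poly g b = 0" for b
    proof -
      have "poly f b = 0" using g b by simp
      hence ev: "even (order b f)" using less.prems(2) b by blast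
      have of: "order b f = order b ([:-a,1:]^2) + order b g"
        using g less.prems(1) by (simp add: order_mult)
      show ?thesis
      proof (cases "b = a")
        case True thus ?thesis using ev of by (simp add: order_power_n_n)
      next
        case False
        hence "poly ([:-a,1:]^2) b \<noteq> 0" by simp
        hence "order b ([:-a,1:]^2) = 0" by (rule order_0I)
        thus ?thesis using ev of by simp
      qed
    qed
    hence IH: "(\<forall>x\<in>{-1..1}. poly g x \<ge> 0) \<or> (\<forall>x\<in>{-1..1}. poly g x \<le> 0)"
      using less.hyps[of g] degf g0 by auto
    have sq: "poly f x = (x - a)^2 * poly g x" for x using g by simp
    show ?thesis
    proof (cases "\<forall>x\<in>{-1..1}. poly g x \<ge> 0")
      case True thus ?thesis by (simp add: sq)
    next
      case False hence "\<forall>x\<in>{-1..1}. poly g x \<le> 0" using IH by blast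
      thus ?thesis by (simp add: sq mult_nonneg_nonpos)
    qed
  next
    case False
    show ?thesis
    proof (rule ccontr)
      assume "\<not> ?thesis"
      then obtain x y where xy: "x \<in> {-1..1}" "y \<in> {-1..1}" "poly f x < 0" "poly f y > 0"
        by (auto simp: not_le)
      have "x \<noteq> y" using xy by auto
      then consider "x < y" | "y < x" by linarith
      thus False
      proof cases
        case 1 then obtain z where "x < z" "z < y" "poly f z = 0" using poly_IVT_pos xy by blast
        thus False using False xy by auto
      next
        case 2 then obtain z where "y < z" "z < x" "poly f z = 0" using poly_IVT_neg xy by blast
        thus False using False xy by auto
      qed
    qed
  qed
qed

lemma orth_zeros:
  assumes L: "lin L" and sp: "spos L" and o: "orthp L n p" and p0: "p \<noteq> 0"
  shows "card {x. poly p x = 0} = n \<and> {x. poly p x = 0} \<subseteq> {-1<..<1}"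
proof -
  define Z where "Z = {x. poly p x = 0}"
  define S where "S = {a \<in> {-1<..<1}. poly p a = 0 \<and> odd (order a p)}"
  have finZ: "finite Z" unfolding Z_def using p0 by (rule poly_roots_finite)
  have SZ: "S \<subseteq> Z" unfolding S_def Z_def by auto
  have finS: "finite S" using finite_subset[OF SZ finZ] .
  have cZ: "card Z \<le> n" using card_poly_roots_bound[OF p0] o unfolding Z_def orthp_def by simp
  have "card S \<ge> n"
  proof (rule ccontr)
    assume "\<not> n \<le> card S"
    define q where "q = (\<Prod>a\<in>S. [:-a,1::real:])"
    have q0: "q \<noteq> 0" unfolding q_def using finS by auto
    have "degree q = card S" unfolding q_def by (subst degree_prod_sum_eq) auto
    hence "L (p * q) = 0" using o \<open>\<not> n \<le> card S\<close> unfolding orthp_def by auto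
    define f where "f = p * q"
    have f0: "f \<noteq> 0" unfolding f_def using p0 q0 by simp
    have oq: "order b q = (if b \<in> S then 1 else 0)" for b
    proof (cases "b \<in> S")
      case True
      have "q = [:-b,1:] * (\<Prod>a\<in>S-{b}. [:-a,1::real:])"
        unfolding q_def using True finS by (simp add: prod.remove)
      moreover have "poly (\<Prod>a\<in>S-{b}. [:-a,1::real:]) b \<noteq> 0"
        using finS by (simp add: poly_prod)
      hence "order b (\<Prod>a\<in>S-{b}. [:-a,1::real:]) = 0" by (rule order_0I)
      ultimately have "order b q = order b [:-b,1:] + 0"
        using q0 order_mult[of "[:-b,1:]" "\<Prod>a\<in>S-{b}. [:-a,1::real:]" b] by simp
      also have "order b [:-b,1:] = 1" using order_power_n_n[of b 1] by simp
      finally show ?thesis using True by simp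
    next
      case False
      have "poly q b \<noteq> 0" unfolding q_def using False finS by (auto simp: poly_prod)
      thus ?thesis using False by (simp add: order_0I)
    qed
    have "even (order b f)" if b: "b \<in> {-1<..<1}" "poly f b = 0" for b
    proof -
      have ofb: "order b f = order b p + order b q" unfolding f_def using f0 f_def by (simp add: order_mult)
      show ?thesis
      proof (cases "b \<in> S")
        case True
        hence "odd (order b p)" unfolding S_def by auto
        thus ?thesis using ofb oq True by simp
      next
        case False
        show ?thesis
        proof (cases "poly p b = 0")
          case True
          hence "even (order b p)" using False b unfolding S_def by auto
          thus ?thesis using ofb oq False by simp
        next
          case False2: False
          hence "poly q b = 0" using b unfolding f_def by simp
          hence "order b q \<noteq> 0" using q0 order_root by blast
          hence "b \<in> S" using oq[of b] by (auto split: if_splits)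
          thus ?thesis using False by simp
        qed
      qed
    qed
    hence sg: "(\<forall>x\<in>{-1..1}. poly f x \<ge> 0) \<or> (\<forall>x\<in>{-1..1}. poly f x \<le> 0)"
      using even_sign[OF f0] by blast
    have "L f \<noteq> 0"
    proof (cases "\<forall>x\<in>{-1..1}. poly f x \<ge> 0")
      case True
      have "L f > 0" using sp f0 True unfolding spos_def by blast
      thus ?thesis by simp
    next
      case False
      hence "\<forall>x\<in>{-1..1}. poly (-f) x \<ge> 0" using sg by auto
      moreover have "-f \<noteq> 0" using f0 by simp
      ultimately have "L (-f) > 0" using sp unfolding spos_def by blast
      thus ?thesis using lin_uminus[OF L] by simp
    qed
    thus False using \<open>L (p * q) = 0\<close> f_def by simp
  qed
  hence "card S = card Z" using cZ card_mono[OF finZ SZ] by simp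
  hence SeZ: "S = Z" by (rule card_subset_eq[OF finZ SZ, rotated])
  have "card Z = n" using cZ \<open>card S \<ge> n\<close> SeZ by simp
  moreover have "Z \<subseteq> {-1<..<1}" unfolding SeZ[symmetric] S_def by blast
  ultimately show ?thesis unfolding Z_def by blast
qed

lemma quad:
  assumes L: "lin L" and pos: "posd L" and o: "orthp L n p" and p0: "p \<noteq> 0"
    and cZ: "card {x. poly p x = 0} = n" and n1: "n \<ge> 1"
  shows "\<exists>\<mu>. (\<forall>z\<in>{x. poly p x = 0}. \<mu> z \<ge> 0) \<and>
     (\<forall>f. degree f < 2 * n \<longrightarrow> L f = (\<Sum>z\<in>{x. poly p x = 0}. \<mu> z * poly f z))"
proof -
  define Z where "Z = {x. poly p x = 0}"
  have finZ: "finite Z" unfolding Z_def using p0 by (rule poly_roots_finite)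
  have cZ': "card Z = n" using cZ Z_def by simp
  have dp: "degree p = n" using o unfolding orthp_def by simp
  define l where "l z = (\<Prod>y\<in>Z-{z}. smult (1/(z-y)) [:-y,1::real:])" for z
  have pl: "poly (l z) x = (\<Prod>y\<in>Z-{z}. (x - y) / (z - y))" for z x
    unfolding l_def by (simp add: poly_prod diff_divide_distrib)
  have lz: "poly (l z) z = 1" if "z \<in> Z" for z
    unfolding pl by (rule prod.neutral) auto
  have ly: "poly (l z) y = 0" if "z \<in> Z" "y \<in> Z" "y \<noteq> z" for z y
    unfolding pl using finZ that by (auto intro: prod_zero)
  have dl: "degree (l z) \<le> n - 1" if "z \<in> Z" for z
  proof -
    have "degree (l z) \<le> (\<Sum>y\<in>Z-{z}. degree (smult (1/(z-y)) [:-y,1::real:]))"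
      unfolding l_def using degree_prod_sum_le[of "Z-{z}" "\<lambda>y. smult (1/(z-y)) [:-y,1::real:]"] finZ
      by (simp only: o_def finite_Diff)
    also have "\<dots> \<le> (\<Sum>y\<in>Z-{z}. 1)"
      by (intro sum_mono) (rule order.trans[OF degree_smult_le], simp)
    also have "\<dots> = n - 1" using cZ' that finZ by simp
    finally show ?thesis .
  qed
  have interp: "r = (\<Sum>z\<in>Z. smult (poly r z) (l z))" if dr: "degree r < n" for r
  proof (rule poly_eqI_degree[of Z])
    show "poly r x = poly (\<Sum>z\<in>Z. smult (poly r z) (l z)) x" if "x \<in> Z" for x
    proof -
      have "poly (\<Sum>z\<in>Z. smult (poly r z) (l z)) x = (\<Sum>z\<in>Z. poly r z * poly (l z) x)"
        by (simp add: poly_sum)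
      also have "\<dots> = poly r x * poly (l x) x"
        using that finZ ly by (subst sum.remove[of _ x]) (auto intro!: sum.neutral)
      finally show ?thesis using lz that by simp
    qed
    show "degree r < card Z" using dr cZ' by simp
    have "degree (\<Sum>z\<in>Z. smult (poly r z) (l z)) \<le> n - 1"
      using finZ dl by (intro degree_sum_le) (auto intro: order.trans[OF degree_smult_le])
    thus "degree (\<Sum>z\<in>Z. smult (poly r z) (l z)) < card Z" using cZ' n1 by simp
  qed
  define \<mu> where "\<mu> z = L (l z)" for z
  have Q: "L f = (\<Sum>z\<in>Z. \<mu> z * poly f z)" if df: "degree f < 2 * n" for f
  proof -
    define d where "d = f div p"
    define r where "r = f mod p"
    have fdr: "f = p * d + r" unfolding d_def r_def by simp
    have dr: "degree r < n"
    proof (cases "r = 0")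
      case True thus ?thesis using n1 by simp
    next
      case False thus ?thesis using degree_mod_less[OF p0, of f] dp r_def by auto
    qed
    have dd: "degree d < n"
    proof (cases "d = 0")
      case True thus ?thesis using n1 by simp
    next
      case False
      have "degree (p * d) = n + degree d" using False p0 dp by (simp add: degree_mult_eq)
      moreover have "p * d = f - r" using fdr by simp
      moreover have "degree (f - r) < 2 * n"
        using degree_diff_le_max[of f r] df dr by simp
      ultimately show ?thesis by simp
    qed
    have "L (p * d) = 0" using o dd unfolding orthp_def by simp
    hence "L f = L r" using fdr L by (simp add: lin_add)
    also have "\<dots> = L (\<Sum>z\<in>Z. smult (poly r z) (l z))" using interp[OF dr] by simp
    also have "\<dots> = (\<Sum>z\<in>Z. poly r z * \<mu> z)" using L by (simp add: lin_sum lin_smult \<mu>_def)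
    also have "\<dots> = (\<Sum>z\<in>Z. \<mu> z * poly f z)"
    proof (intro sum.cong refl)
      fix z assume "z \<in> Z"
      hence "poly p z = 0" unfolding Z_def by simp
      hence "poly f z = poly r z" using fdr by simp
      thus "poly r z * \<mu> z = \<mu> z * poly f z" by simp
    qed
    finally show ?thesis .
  qed
  have "\<mu> z \<ge> 0" if "z \<in> Z" for z
  proof -
    have "degree (l z * l z) \<le> (n - 1) + (n - 1)"
      using dl[OF that] degree_mult_le[of "l z" "l z"] by simp
    hence "degree (l z * l z) < 2 * n" using n1 by simp
    hence "L (l z * l z) = (\<Sum>y\<in>Z. \<mu> y * poly (l z * l z) y)" by (rule Q)
    also have "\<dots> = \<mu> z * poly (l z * l z) z"
      using that finZ ly by (subst sum.remove[of _ z]) (auto intro!: sum.neutral)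
    also have "\<dots> = \<mu> z" using lz[OF that] by simp
    finally have "\<mu> z = L (l z * l z)" by simp
    moreover have "l z \<noteq> 0" using lz[OF that] by auto
    ultimately show ?thesis using pos unfolding posd_def by force
  qed
  thus ?thesis using Q unfolding Z_def by blast
qed

lemma quad_sign:
  assumes L: "lin L" and pos: "posd L" and o: "orthp L n p" and p0: "p \<noteq> 0"
    and cZ: "card {x. poly p x = 0} = n" and n1: "n \<ge> 1" and dq: "degree q \<le> n - 1"
  shows "(\<forall>z. poly p z = 0 \<longrightarrow> poly q z \<noteq> 0 \<longrightarrow> t \<le> z) \<Longrightarrow> L ([:-t,1:] * q * q) \<ge> 0"
    and "(\<forall>z. poly p z = 0 \<longrightarrow> poly q z \<noteq> 0 \<longrightarrow> z \<le> t) \<Longrightarrow> L ([:-t,1:] * q * q) \<le> 0"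
proof -
  obtain \<mu> where mu: "\<forall>z\<in>{x. poly p x = 0}. \<mu> z \<ge> 0"
    "\<forall>f. degree f < 2 * n \<longrightarrow> L f = (\<Sum>z\<in>{x. poly p x = 0}. \<mu> z * poly f z)"
    using quad[OF L pos o p0 cZ n1] by blast
  have "degree ([:-t,1:] * q * q) \<le> 1 + (n - 1) + (n - 1)"
    using degree_mult_le[of "[:-t,1:] * q" q] degree_mult_le[of "[:-t,1:]" q] dq by simp
  hence "degree ([:-t,1:] * q * q) < 2 * n" using n1 by simp
  hence eq: "L ([:-t,1:] * q * q) = (\<Sum>z\<in>{x. poly p x = 0}. \<mu> z * ((z - t) * (poly q z)^2))"
    using mu(2) by (simp add: power2_eq_square algebra_simps)
  show "L ([:-t,1:] * q * q) \<ge> 0" if h: "\<forall>z. poly p z = 0 \<longrightarrow> poly q z \<noteq> 0 \<longrightarrow> t \<le> z"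
    unfolding eq
  proof (intro sum_nonneg)
    fix z assume z: "z \<in> {x. poly p x = 0}"
    have "(z - t) * (poly q z)^2 \<ge> 0"
      using h z by (cases "poly q z = 0") auto
    thus "\<mu> z * ((z - t) * (poly q z)^2) \<ge> 0" using mu(1) z by simp
  qed
  show "L ([:-t,1:] * q * q) \<le> 0" if h: "\<forall>z. poly p z = 0 \<longrightarrow> poly q z \<noteq> 0 \<longrightarrow> z \<le> t"
    unfolding eq
  proof (intro sum_nonpos)
    fix z assume z: "z \<in> {x. poly p x = 0}"
    have "(z - t) * (poly q z)^2 \<le> 0"
      using h z by (cases "poly q z = 0") (auto simp: mult_nonpos_nonneg)
    thus "\<mu> z * ((z - t) * (poly q z)^2) \<le> 0" using mu(1) z by (simp add: mult_nonneg_nonpos)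
  qed
qed

lemma exists_q:
  fixes Z1 Z2 :: "real set"
  assumes f1: "finite Z1" and f2: "finite Z2" and c1: "card Z1 = n" and c2: "card Z2 = n"
    and i: "1 \<le> i" "i \<le> n"
  shows "\<exists>q. q \<noteq> 0 \<and> degree q \<le> n - 1 \<and>
     (\<forall>z\<in>Z1. poly q z \<noteq> 0 \<longrightarrow> sorted_list_of_set Z1 ! (i - 1) \<le> z) \<and>
     (\<forall>z\<in>Z2. poly q z \<noteq> 0 \<longrightarrow> z \<le> sorted_list_of_set Z2 ! (i - 1))"
proof -
  define s1 where "s1 = sorted_list_of_set Z1"
  define s2 where "s2 = sorted_list_of_set Z2"
  have l1: "length s1 = n" "distinct s1" "sorted s1" "set s1 = Z1" using f1 c1 unfolding s1_def by auto
  have l2: "length s2 = n" "distinct s2" "sorted s2" "set s2 = Z2" using f2 c2 unfolding s2_def by auto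
  define A where "A = set (take (i - 1) s1)"
  define B where "B = set (drop i s2)"
  define q where "q = (\<Prod>a\<in>A. [:-a,1::real:]) * (\<Prod>b\<in>B. [:-b,1::real:])"
  have cA: "card A = i - 1" unfolding A_def using l1 i by (simp add: distinct_card)
  have cB: "card B = n - i" unfolding B_def using l2 i by (simp add: distinct_card)
  have q0: "q \<noteq> 0" unfolding q_def A_def B_def by auto
  have "degree q = card A + card B" unfolding q_def
    by (subst degree_mult_eq) (auto simp: degree_prod_sum_eq A_def B_def)
  hence dq: "degree q \<le> n - 1" using cA cB i by simp
  have h1: "s1 ! (i - 1) \<le> z" if "z \<in> Z1" "poly q z \<noteq> 0" for z
  proof -
    have "z \<in> set s1" using that l1 by simp
    then obtain j where j: "j < n" "z = s1 ! j" using l1(1) by (auto simp: in_set_conv_nth)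
    have "z \<notin> A" using that unfolding q_def A_def by (auto simp: poly_prod)
    hence "\<not> j < i - 1"
    proof (rule contrapos_nn)
      assume "j < i - 1"
      hence "take (i - 1) s1 ! j = z" "j < length (take (i - 1) s1)" using j l1 by auto
      thus "z \<in> A" unfolding A_def by (metis nth_mem)
    qed
    thus ?thesis using j l1 i by (auto intro: sorted_nth_mono)
  qed
  have h2: "z \<le> s2 ! (i - 1)" if "z \<in> Z2" "poly q z \<noteq> 0" for z
  proof -
    have "z \<in> set s2" using that l2 by simp
    then obtain j where j: "j < n" "z = s2 ! j" using l2(1) by (auto simp: in_set_conv_nth)
    have "z \<notin> B" using that unfolding q_def B_def by (auto simp: poly_prod)
    hence "\<not> i \<le> j"
    proof (rule contrapos_nn)
      assume "i \<le> j"
      hence "drop i s2 ! (j - i) = z" "j - i < length (drop i s2)" using j l2 by auto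
      thus "z \<in> B" unfolding B_def by (metis nth_mem)
    qed
    thus ?thesis using j l2 i by (auto intro: sorted_nth_mono)
  qed
  show ?thesis using q0 dq h1 h2 unfolding s1_def s2_def by blast
qed

lemma compare_minus:
  assumes L1: "lin L1" "posd L1" "orthp L1 n p1" "p1 \<noteq> 0" "card {x. poly p1 x = 0} = n"
    and L2: "lin L2" "posd L2" "orthp L2 n p2" "p2 \<noteq> 0" "card {x. poly p2 x = 0} = n"
    and i: "1 \<le> i" "i \<le> n" and c: "c \<ge> 0"
    and hyp: "\<And>q. q \<noteq> 0 \<Longrightarrow> degree q \<le> n - 1 \<Longrightarrow>
       c * L2 ([:1,-1:] * q * q) * L1 (q * q) \<le> L1 ([:1,-1:] * q * q) * L2 (q * q)"
  shows "c * (1 - sorted_list_of_set {x. poly p2 x = 0} ! (i - 1))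
           \<le> 1 - sorted_list_of_set {x. poly p1 x = 0} ! (i - 1)"
proof -
  define t1 where "t1 = sorted_list_of_set {x. poly p1 x = 0} ! (i - 1)"
  define t2 where "t2 = sorted_list_of_set {x. poly p2 x = 0} ! (i - 1)"
  have n1: "n \<ge> 1" using i by simp
  obtain q where q: "q \<noteq> 0" "degree q \<le> n - 1"
     "\<forall>z\<in>{x. poly p1 x = 0}. poly q z \<noteq> 0 \<longrightarrow> t1 \<le> z"
     "\<forall>z\<in>{x. poly p2 x = 0}. poly q z \<noteq> 0 \<longrightarrow> z \<le> t2"
    using exists_q[OF poly_roots_finite[OF L1(4)] poly_roots_finite[OF L2(4)] L1(5) L2(5) i]
    unfolding t1_def t2_def by blast
  have s1: "L1 ([:-t1,1:] * q * q) \<ge> 0"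
    using quad_sign(1)[OF L1(1-5) n1 q(2)] q(3) by blast
  have s2: "L2 ([:-t2,1:] * q * q) \<le> 0"
    using quad_sign(2)[OF L2(1-5) n1 q(2)] q(4) by blast
  have id: "[:1,-1:] * q * q = smult (1 - t) (q * q) - [:-t,1:] * q * q" for t :: real
    by (rule poly_ext) (simp add: algebra_simps)
  define P1 where "P1 = L1 (q * q)"
  define P2 where "P2 = L2 (q * q)"
  define A1 where "A1 = L1 ([:1,-1:] * q * q)"
  define A2 where "A2 = L2 ([:1,-1:] * q * q)"
  have P1: "P1 > 0" using L1(2) q(1) unfolding posd_def P1_def by blast
  have P2: "P2 > 0" using L2(2) q(1) unfolding posd_def P2_def by blast
  have A1: "A1 \<le> (1 - t1) * P1" using s1 L1(1) unfolding A1_def P1_def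
    by (subst id[of t1]) (simp add: lin_diff lin_smult)
  have A2: "A2 \<ge> (1 - t2) * P2" using s2 L2(1) unfolding A2_def P2_def
    by (subst id[of t2]) (simp add: lin_diff lin_smult)
  have H: "c * A2 * P1 \<le> A1 * P2" using hyp[OF q(1,2)] unfolding A1_def A2_def P1_def P2_def .
  have "c * (1 - t2) * P2 * P1 \<le> c * A2 * P1"
    using A2 c P1 by (simp add: mult_left_mono mult_right_mono mult.assoc)
  also have "\<dots> \<le> A1 * P2" by (rule H)
  also have "\<dots> \<le> (1 - t1) * P1 * P2" using A1 P2 by (simp add: mult_right_mono)
  finally have "(c * (1 - t2)) * (P1 * P2) \<le> (1 - t1) * (P1 * P2)" by (simp add: algebra_simps)
  hence "c * (1 - t2) \<le> 1 - t1" using P1 P2 by (simp add: mult_le_cancel_right)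
  thus ?thesis unfolding t1_def t2_def .
qed

lemma compare_plus:
  assumes L1: "lin L1" "posd L1" "orthp L1 n p1" "p1 \<noteq> 0" "card {x. poly p1 x = 0} = n"
    and L2: "lin L2" "posd L2" "orthp L2 n p2" "p2 \<noteq> 0" "card {x. poly p2 x = 0} = n"
    and i: "1 \<le> i" "i \<le> n" and c: "c \<ge> 0"
    and hyp: "\<And>q. q \<noteq> 0 \<Longrightarrow> degree q \<le> n - 1 \<Longrightarrow>
       c * L2 ([:1,1:] * q * q) * L1 (q * q) \<le> L1 ([:1,1:] * q * q) * L2 (q * q)"
  shows "c * (1 + sorted_list_of_set {x. poly p2 x = 0} ! (i - 1))
           \<le> 1 + sorted_list_of_set {x. poly p1 x = 0} ! (i - 1)"
proof -
  define t1 where "t1 = sorted_list_of_set {x. poly p1 x = 0} ! (i - 1)"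
  define t2 where "t2 = sorted_list_of_set {x. poly p2 x = 0} ! (i - 1)"
  have n1: "n \<ge> 1" using i by simp
  obtain q where q: "q \<noteq> 0" "degree q \<le> n - 1"
     "\<forall>z\<in>{x. poly p2 x = 0}. poly q z \<noteq> 0 \<longrightarrow> t2 \<le> z"
     "\<forall>z\<in>{x. poly p1 x = 0}. poly q z \<noteq> 0 \<longrightarrow> z \<le> t1"
    using exists_q[OF poly_roots_finite[OF L2(4)] poly_roots_finite[OF L1(4)] L2(5) L1(5) i]
    unfolding t1_def t2_def by blast
  have s1: "L1 ([:-t1,1:] * q * q) \<le> 0"
    using quad_sign(2)[OF L1(1-5) n1 q(2)] q(4) by blast
  have s2: "L2 ([:-t2,1:] * q * q) \<ge> 0"
    using quad_sign(1)[OF L2(1-5) n1 q(2)] q(3) by blast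
  have id: "[:1,1:] * q * q = smult (1 + t) (q * q) + [:-t,1:] * q * q" for t :: real
    by (rule poly_ext) (simp add: algebra_simps)
  define P1 where "P1 = L1 (q * q)"
  define P2 where "P2 = L2 (q * q)"
  define A1 where "A1 = L1 ([:1,1:] * q * q)"
  define A2 where "A2 = L2 ([:1,1:] * q * q)"
  have P1: "P1 > 0" using L1(2) q(1) unfolding posd_def P1_def by blast
  have P2: "P2 > 0" using L2(2) q(1) unfolding posd_def P2_def by blast
  have A1: "A1 \<le> (1 + t1) * P1" using s1 L1(1) unfolding A1_def P1_def
    by (subst id[of t1]) (simp add: lin_add lin_smult)
  have A2: "A2 \<ge> (1 + t2) * P2" using s2 L2(1) unfolding A2_def P2_def
    by (subst id[of t2]) (simp add: lin_add lin_smult)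
  have H: "c * A2 * P1 \<le> A1 * P2" using hyp[OF q(1,2)] unfolding A1_def A2_def P1_def P2_def .
  have "c * (1 + t2) * P2 * P1 \<le> c * A2 * P1"
    using A2 c P1 by (simp add: mult_left_mono mult_right_mono mult.assoc)
  also have "\<dots> \<le> A1 * P2" by (rule H)
  also have "\<dots> \<le> (1 + t1) * P1 * P2" using A1 P2 by (simp add: mult_right_mono)
  finally have "(c * (1 + t2)) * (P1 * P2) \<le> (1 + t1) * (P1 * P2)" by (simp add: algebra_simps)
  hence "c * (1 + t2) \<le> 1 + t1" using P1 P2 by (simp add: mult_le_cancel_right)
  thus ?thesis unfolding t1_def t2_def .
qed

definition Lw :: "(real \<Rightarrow> real) \<Rightarrow> real poly \<Rightarrow> real" where
  "Lw v f = integral {-1..1} (\<lambda>t. poly f t * v t)"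

lemma pcont: "continuous_on S (poly (p :: real poly))"
  using continuous_on_poly[OF continuous_on_id, of S p] by simp

lemma poly_bounded: "bounded ((poly f :: real \<Rightarrow> real) ` {-1..1})"
  by (intro compact_imp_bounded compact_continuous_image) (auto intro: continuous_intros)

lemma bw_absint:
  assumes "bounded_weight w m M"
  shows "(\<lambda>t. poly f t * w t) absolutely_integrable_on {-1..1}"
proof (rule absolutely_integrable_bounded_measurable_product_real)
  show "poly f \<in> borel_measurable (lebesgue_on {-1..1})"
    by (rule continuous_imp_measurable_on_sets_lebesgue) (auto intro: continuous_intros)
  show "w absolutely_integrable_on {-1..1}"
    using assms unfolding bounded_weight_def weight_fn_def
    by (intro nonnegative_absolutely_integrable_1) auto
qed (auto simp: poly_bounded)

lemma bw_int:
  assumes "bounded_weight w m M"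
  shows "(\<lambda>t. poly f t * w t) integrable_on {-1..1}"
  using bw_absint[OF assms] by (simp add: absolutely_integrable_on_def)

lemma bw_lin: assumes "bounded_weight w m M" shows "lin (Lw w)"
  unfolding lin_def Lw_def
proof safe
  fix f g
  show "integral {-1..1} (\<lambda>t. poly (f + g) t * w t) =
        integral {-1..1} (\<lambda>t. poly f t * w t) + integral {-1..1} (\<lambda>t. poly g t * w t)"
    using integral_add[OF bw_int[OF assms, of f] bw_int[OF assms, of g]]
    by (simp add: distrib_right)
next
  fix c f
  show "integral {-1..1} (\<lambda>t. poly (smult c f) t * w t) = c * integral {-1..1} (\<lambda>t. poly f t * w t)"
    by (simp add: mult.assoc)
qed

lemma bw_compare:
  assumes bw: "bounded_weight w m M" and g: "\<And>x. x \<in> {-1..1} \<Longrightarrow> poly g x \<ge> 0"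
  shows "m * integral {-1..1} (poly g) \<le> Lw w g \<and> Lw w g \<le> M * integral {-1..1} (poly g)"
proof -
  have ae: "AE t in lebesgue. t \<in> {-1..1} \<longrightarrow> m \<le> w t \<and> w t \<le> M"
    using bw unfolding bounded_weight_def by blast
  then obtain N where N: "{x \<in> space lebesgue. \<not> (x \<in> {-1..1} \<longrightarrow> m \<le> w x \<and> w x \<le> M)} \<subseteq> N"
     "emeasure lebesgue N = 0" "N \<in> sets lebesgue" by (rule AE_E)
  have negN: "negligible N" unfolding negligible_iff_null_sets using N by (simp add: null_sets_def)
  define wc where "wc t = max m (min M (w t))" for t
  have eq: "poly g t * wc t = poly g t * w t" if "t \<in> {-1..1} - N" for t
    using N(1) that unfolding wc_def by auto
  have intc: "(\<lambda>t. poly g t * wc t) integrable_on {-1..1}"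
    by (rule integrable_spike[OF bw_int[OF bw, of g] negN]) (use eq in auto)
  have Leq: "Lw w g = integral {-1..1} (\<lambda>t. poly g t * wc t)"
    unfolding Lw_def by (rule integral_spike[OF negN]) (use eq in auto)
  have mM: "m \<le> M"
  proof -
    obtain x where "x \<in> {-1..1::real} - N"
    proof -
      have "\<not> negligible {-1..1::real}" by (simp add: negligible_iff_measure0)
      hence "{-1..1::real} - N \<noteq> {}" using negN negligible_subset by blast
      thus ?thesis using that by blast
    qed
    thus ?thesis using N(1) by auto
  qed
  have pc: "continuous_on {-1..1} (poly g)" by (rule pcont)
  have ig: "poly g integrable_on {-1..1}" using pc integrable_continuous_real by blast
  have icm: "(\<lambda>t. c * poly g t) integrable_on {-1..1}" for c
    by (rule integrable_continuous_real) (auto intro!: continuous_intros pcont)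
  have wcb: "m \<le> wc t" "wc t \<le> M" for t unfolding wc_def using mM by auto
  have "integral {-1..1} (\<lambda>t. m * poly g t) \<le> integral {-1..1} (\<lambda>t. poly g t * wc t)"
  proof (rule integral_le[OF icm intc])
    fix x assume "x \<in> {-1..1::real}"
    thus "m * poly g x \<le> poly g x * wc x"
      using mult_left_mono[OF wcb(1)[of x], of "poly g x"] g by (simp add: mult.commute)
  qed
  moreover have "integral {-1..1} (\<lambda>t. poly g t * wc t) \<le> integral {-1..1} (\<lambda>t. M * poly g t)"
  proof (rule integral_le[OF intc icm])
    fix x assume "x \<in> {-1..1::real}"
    thus "poly g x * wc x \<le> M * poly g x"
      using mult_left_mono[OF wcb(2)[of x], of "poly g x"] g by (simp add: mult.commute)
  qed
  ultimately show ?thesis using Leq by simp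
qed

lemma int_poly_pos:
  fixes f :: "real poly"
  assumes "f \<noteq> 0" "\<And>x. x \<in> {-1..1} \<Longrightarrow> poly f x \<ge> 0"
  shows "integral {-1..1} (poly f) > 0"
proof -
  have pc: "continuous_on {-1..1} (poly f)" by (rule pcont)
  have ig: "poly f integrable_on {-1..1}" using pc integrable_continuous_real by blast
  have ge: "integral {-1..1} (poly f) \<ge> 0" by (rule integral_nonneg[OF ig]) (use assms in auto)
  have "integral {-1..1} (poly f) \<noteq> 0"
  proof
    assume z: "integral {-1..1} (poly f) = 0"
    have "poly f x = 0" if "x \<in> {-1..1}" for x
    proof (rule has_integral_0_cbox_imp_0[of "-1::real" 1 "poly f"])
      show "continuous_on (cbox (-1) 1) (poly f)" using pc by simp
      show "\<And>x. x \<in> box (-1) 1 \<Longrightarrow> 0 \<le> poly f x" using assms by (auto simp: box_real)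
      show "(poly f has_integral 0) (cbox (-1) 1)" using ig z by (metis cbox_interval integrable_integral)
      show "box (-1::real) 1 \<noteq> {}" by (simp add: box_real)
      show "x \<in> cbox (-1) 1" using that by simp
    qed
    hence "{-1..1::real} \<subseteq> {x. poly f x = 0}" by auto
    moreover have "finite {x. poly f x = 0}" using assms(1) by (rule poly_roots_finite)
    ultimately have "finite {-1..1::real}" by (rule finite_subset)
    thus False using infinite_Icc[of "-1::real" 1] by simp
  qed
  thus ?thesis using ge by simp
qed

lemma bw_spos: assumes bw: "bounded_weight w m M" shows "spos (Lw w)"
  unfolding spos_def
proof safe
  fix f :: "real poly" assume f: "f \<noteq> 0" "\<forall>x\<in>{-1..1}. 0 \<le> poly f x"
  have "m * integral {-1..1} (poly f) \<le> Lw w f" using bw_compare[OF bw] f by blast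
  moreover have "m > 0" using bw unfolding bounded_weight_def by simp
  moreover have "integral {-1..1} (poly f) > 0" using int_poly_pos f by blast
  ultimately show "Lw w f > 0" by (smt (verit) mult_pos_pos)
qed

lemma spos_posd: "spos L \<Longrightarrow> posd L"
  unfolding spos_def posd_def by (auto simp: no_zero_divisors)

lemma bw_posd: "bounded_weight w m M \<Longrightarrow> posd (Lw w)"
  using bw_spos spos_posd by blast

lemma orth_poly_iff: "orth_poly v n p \<longleftrightarrow> lead_coeff p = 1 \<and> orthp (Lw v) n p"
  unfolding orth_poly_def orthp_def Lw_def by (auto simp: mult.assoc)

lemma bw_the:
  assumes bw: "bounded_weight w m M"
  shows "(THE p. orth_poly w n p) = gs (Lw w) n"
proof (rule the_equality)
  show "orth_poly w n (gs (Lw w) n)"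
    using gs_props[OF bw_lin[OF bw] bw_posd[OF bw]] orth_poly_iff by blast
  fix p assume "orth_poly w n p"
  thus "p = gs (Lw w) n"
    using orth_unique[OF bw_lin[OF bw] bw_posd[OF bw]] gs_props[OF bw_lin[OF bw] bw_posd[OF bw]]
      orth_poly_iff by blast
qed

lemma bw_xi:
  assumes bw: "bounded_weight w m M"
  shows "xi w n i = sorted_list_of_set {t. poly (gs (Lw w) n) t = 0} ! (i - 1)"
  unfolding xi_def bw_the[OF bw] ..

lemma bw_facts:
  assumes bw: "bounded_weight w m M"
  shows "lin (Lw w)" "posd (Lw w)" "orthp (Lw w) n (gs (Lw w) n)" "gs (Lw w) n \<noteq> 0"
    "card {x. poly (gs (Lw w) n) x = 0} = n" "{x. poly (gs (Lw w) n) x = 0} \<subseteq> {-1<..<1}"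
proof -
  show L: "lin (Lw w)" "posd (Lw w)" using bw_lin bw_posd bw by blast+
  have g: "degree (gs (Lw w) n) = n \<and> lead_coeff (gs (Lw w) n) = 1 \<and> orthp (Lw w) n (gs (Lw w) n)"
    by (rule gs_props[OF L])
  thus o: "orthp (Lw w) n (gs (Lw w) n)" by blast
  show ne: "gs (Lw w) n \<noteq> 0" using g by auto
  show "card {x. poly (gs (Lw w) n) x = 0} = n" "{x. poly (gs (Lw w) n) x = 0} \<subseteq> {-1<..<1}"
    using orth_zeros[OF L(1) bw_spos[OF bw] o ne] by blast+
qed

lemma u_bw: "bounded_weight (\<lambda>_. 1) 1 1"
  unfolding bounded_weight_def weight_fn_def by auto

lemma Lu_eq: "Lw (\<lambda>_. 1) f = integral {-1..1} (poly f)"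
  unfolding Lw_def by simp

lemma bw_mM: assumes bw: "bounded_weight w m M" shows "0 < m" "m \<le> M"
proof -
  show m: "0 < m" using bw unfolding bounded_weight_def by simp
  have "m * integral {-1..1} (poly 1) \<le> Lw w 1 \<and> Lw w 1 \<le> M * integral {-1..1} (poly (1::real poly))"
    by (rule bw_compare[OF bw]) simp
  moreover have "integral {-1..1} (poly (1::real poly)) = 2"
  proof -
    have "poly (1::real poly) = (\<lambda>_. 1)" by (rule ext) simp
    thus ?thesis by simp
  qed
  ultimately show "m \<le> M" by simp
qed

lemma hyp_arith1:
  fixes m M A1 B1 Ia Ib :: real
  assumes "0 < m" "m \<le> M" "m * Ia \<le> A1" "B1 \<le> M * Ib" "0 \<le> Ia" "0 \<le> Ib"
  shows "m / M * Ia * B1 \<le> A1 * Ib"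
proof -
  have M: "M > 0" using assms by simp
  have "m / M * Ia * B1 \<le> m / M * Ia * (M * Ib)"
    using assms M by (intro mult_left_mono) auto
  also have "\<dots> = (m * Ia) * Ib" using M by simp
  also have "\<dots> \<le> A1 * Ib" using assms by (intro mult_right_mono) auto
  finally show ?thesis .
qed

lemma hyp_arith2:
  fixes m M A1 B1 Ia Ib :: real
  assumes "0 < m" "m \<le> M" "A1 \<le> M * Ia" "m * Ib \<le> B1" "0 \<le> Ia" "0 \<le> Ib"
  shows "m / M * A1 * Ib \<le> Ia * B1"
proof -
  have M: "M > 0" using assms by simp
  have "m / M * A1 * Ib = A1 * (m / M * Ib)" by simp
  also have "\<dots> \<le> (M * Ia) * (m / M * Ib)"
    using assms M by (intro mult_right_mono) auto
  also have "\<dots> = Ia * (m * Ib)" using M by simp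
  also have "\<dots> \<le> Ia * B1" using assms by (intro mult_left_mono) auto
  finally show ?thesis .
qed

lemma nonneg_a: "x \<in> {-1..1} \<Longrightarrow> poly ([:1,-1:] * q * q) x \<ge> (0::real)"
proof -
  assume "x \<in> {-1..1}"
  moreover have "poly ([:1,-1:] * q * q) x = (1 - x) * (poly q x)^2"
    by (simp add: algebra_simps power2_eq_square)
  ultimately show ?thesis by simp
qed
lemma nonneg_b: "x \<in> {-1..1} \<Longrightarrow> poly ([:1,1:] * q * q) x \<ge> (0::real)"
proof -
  assume "x \<in> {-1..1}"
  moreover have "poly ([:1,1:] * q * q) x = (1 + x) * (poly q x)^2"
    by (simp add: algebra_simps power2_eq_square)
  ultimately show ?thesis by simp
qed
lemma nonneg_c: "poly (q * q) x \<ge> (0::real)"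
  by simp

lemma int_nonneg_poly:
  "(\<And>x. x \<in> {-1..1} \<Longrightarrow> poly f x \<ge> (0::real)) \<Longrightarrow> integral {-1..1} (poly f) \<ge> 0"
  by (rule integral_nonneg) (auto intro: integrable_continuous_real pcont)

lemma part1:
  assumes bw: "bounded_weight w m M" and i: "1 \<le> i" "i \<le> n"
  shows "m / M * (1 - xi (\<lambda>_. 1) n i) \<le> 1 - xi w n i \<and>
         1 - xi w n i \<le> M / m * (1 - xi (\<lambda>_. 1) n i) \<and>
         m / M * (1 + xi (\<lambda>_. 1) n i) \<le> 1 + xi w n i \<and>
         1 + xi w n i \<le> M / m * (1 + xi (\<lambda>_. 1) n i)"
proof -
  note W = bw_facts(1,2)[OF bw] bw_facts(3-6)[OF bw, of n]
  note U = bw_facts(1,2)[OF u_bw] bw_facts(3-6)[OF u_bw, of n]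
  have mM: "0 < m" "m \<le> M" using bw_mM[OF bw] by auto
  have c0: "m / M \<ge> 0" using mM by simp
  have cmp: "m * integral {-1..1} (poly g) \<le> Lw w g \<and> Lw w g \<le> M * integral {-1..1} (poly g)"
    if "\<And>x. x \<in> {-1..1} \<Longrightarrow> poly g x \<ge> 0" for g
    using bw_compare[OF bw that] by blast
  have h1: "m / M * Lw (\<lambda>_. 1) (a * q * q) * Lw w (q * q) \<le> Lw w (a * q * q) * Lw (\<lambda>_. 1) (q * q)"
    if "\<And>x. x \<in> {-1..1} \<Longrightarrow> poly (a * q * q) x \<ge> 0" for a q
    unfolding Lu_eq
    by (rule hyp_arith1[OF mM]) (use cmp[OF that] cmp[of "q * q"] int_nonneg_poly that in auto)
  have h2: "m / M * Lw w (a * q * q) * Lw (\<lambda>_. 1) (q * q) \<le> Lw (\<lambda>_. 1) (a * q * q) * Lw w (q * q)"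
    if "\<And>x. x \<in> {-1..1} \<Longrightarrow> poly (a * q * q) x \<ge> 0" for a q
    unfolding Lu_eq
    by (rule hyp_arith2[OF mM]) (use cmp[OF that] cmp[of "q * q"] int_nonneg_poly that in auto)
  have r1: "m / M * (1 - xi (\<lambda>_. 1) n i) \<le> 1 - xi w n i"
    unfolding bw_xi[OF bw] bw_xi[OF u_bw]
    by (rule compare_minus[OF W(1-5) U(1-5) i c0]) (rule h1, rule nonneg_a)
  have r2: "m / M * (1 - xi w n i) \<le> 1 - xi (\<lambda>_. 1) n i"
    unfolding bw_xi[OF bw] bw_xi[OF u_bw]
    by (rule compare_minus[OF U(1-5) W(1-5) i c0]) (rule h2, rule nonneg_a)
  have r3: "m / M * (1 + xi (\<lambda>_. 1) n i) \<le> 1 + xi w n i"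
    unfolding bw_xi[OF bw] bw_xi[OF u_bw]
    by (rule compare_plus[OF W(1-5) U(1-5) i c0]) (rule h1, rule nonneg_b)
  have r4: "m / M * (1 + xi w n i) \<le> 1 + xi (\<lambda>_. 1) n i"
    unfolding bw_xi[OF bw] bw_xi[OF u_bw]
    by (rule compare_plus[OF U(1-5) W(1-5) i c0]) (rule h2, rule nonneg_b)
  have inv: "x \<le> M / m * y" if "m / M * x \<le> y" for x y
  proof -
    have "x = M / m * (m / M * x)" using mM by simp
    also have "\<dots> \<le> M / m * y" using that mM by (intro mult_left_mono) auto
    finally show ?thesis .
  qed
  show ?thesis using r1 r3 inv[OF r2] inv[OF r4] by blast
qed

fun Vp :: "nat \<Rightarrow> real poly" where
  "Vp 0 = 1" | "Vp (Suc 0) = [:-1, 2:]" | "Vp (Suc (Suc n)) = [:0, 2:] * Vp (Suc n) - Vp n"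

fun Wp :: "nat \<Rightarrow> real poly" where
  "Wp 0 = 1" | "Wp (Suc 0) = [:1, 2:]" | "Wp (Suc (Suc n)) = [:0, 2:] * Wp (Suc n) - Wp n"

lemma Vp_cos: "poly (Vp n) (cos t) * cos (t / 2) = cos ((real n + 1/2) * t)"
proof (induction n rule: Vp.induct)
  case 1 thus ?case by (simp add: mult.commute)
next
  case 2
  define a where "a = t / 2"
  have t: "t = 2 * a" unfolding a_def by simp
  have "poly (Vp (Suc 0)) (cos t) * cos (t / 2) = (2 * cos (2 * a) - 1) * cos a" unfolding t by simp
  also have "\<dots> = 4 * cos a ^ 3 - 3 * cos a"
    unfolding cos_double_cos by (simp add: algebra_simps power3_eq_cube power2_eq_square)
  also have "\<dots> = cos (3 * a)" by (rule cos_treble_cos[symmetric])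
  also have "3 * a = (real (Suc 0) + 1/2) * t" unfolding t by simp
  finally show ?case .
next
  case (3 n)
  define x where "x = (real (Suc n) + 1/2) * t"
  have e1: "(real (Suc (Suc n)) + 1/2) * t = x + t" unfolding x_def by (simp add: algebra_simps)
  have e2: "(real n + 1/2) * t = x - t" unfolding x_def by (simp add: algebra_simps)
  have "poly (Vp (Suc (Suc n))) (cos t) * cos (t / 2)
      = 2 * cos t * (poly (Vp (Suc n)) (cos t) * cos (t / 2)) - poly (Vp n) (cos t) * cos (t / 2)"
    by (simp add: algebra_simps)
  also have "\<dots> = 2 * cos t * cos x - cos (x - t)" using 3 e2 x_def by simp
  also have "\<dots> = cos (x + t)" by (simp add: cos_add cos_diff)
  finally show ?case using e1 by simp
qed

lemma Wp_sin: "poly (Wp n) (cos t) * sin (t / 2) = sin ((real n + 1/2) * t)"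
proof (induction n rule: Wp.induct)
  case 1 thus ?case by (simp add: mult.commute)
next
  case 2
  define a where "a = t / 2"
  have t: "t = 2 * a" unfolding a_def by simp
  have cs: "cos a * cos a = 1 - sin a * sin a" using sin_cos_squared_add[of a] by (simp add: power2_eq_square)
  have "poly (Wp (Suc 0)) (cos t) * sin (t / 2) = (2 * cos (2 * a) + 1) * sin a" unfolding t by simp
  also have "\<dots> = 3 * sin a - 4 * sin a ^ 3"
    unfolding cos_double_sin by (simp add: algebra_simps power3_eq_cube power2_eq_square)
  also have "\<dots> = sin (2 * a + a)"
    unfolding sin_add sin_double cos_double_sin power3_eq_cube power2_eq_square
    using cs by algebra
  also have "2 * a + a = (real (Suc 0) + 1/2) * t" unfolding t by simp
  finally show ?case .
next
  case (3 n)
  define x where "x = (real (Suc n) + 1/2) * t"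
  have e1: "(real (Suc (Suc n)) + 1/2) * t = x + t" unfolding x_def by (simp add: algebra_simps)
  have e2: "(real n + 1/2) * t = x - t" unfolding x_def by (simp add: algebra_simps)
  have "poly (Wp (Suc (Suc n))) (cos t) * sin (t / 2)
      = 2 * cos t * (poly (Wp (Suc n)) (cos t) * sin (t / 2)) - poly (Wp n) (cos t) * sin (t / 2)"
    by (simp add: algebra_simps)
  also have "\<dots> = 2 * cos t * sin x - sin (x - t)" using 3 e2 x_def by simp
  also have "\<dots> = sin (x + t)" by (simp add: sin_add sin_diff)
  finally show ?case using e1 by simp
qed

lemma rec_deg:
  fixes P :: "nat \<Rightarrow> real poly"
  assumes "degree (P n) = n" "degree (P (Suc n)) = Suc n" "coeff (P (Suc n)) (Suc n) = 2 ^ Suc n"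
  shows "degree ([:0, 2:] * P (Suc n) - P n) = Suc (Suc n) \<and>
         coeff ([:0, 2:] * P (Suc n) - P n) (Suc (Suc n)) = 2 ^ Suc (Suc n)"
proof -
  have e: "[:0, 2:] * P (Suc n) = pCons 0 (smult 2 (P (Suc n)))" by (simp add: mult_pCons_left)
  have ne: "P (Suc n) \<noteq> 0" using assms(3) by auto
  have d1: "degree ([:0, 2:] * P (Suc n)) = Suc (Suc n)" unfolding e using ne assms(2)
    by (simp add: degree_pCons_eq)
  have "degree ([:0, 2:] * P (Suc n) + - P n) = Suc (Suc n)"
    using degree_add_eq_left[of "- P n" "[:0, 2:] * P (Suc n)"] d1 assms(1) by simp
  moreover have "coeff ([:0, 2:] * P (Suc n) - P n) (Suc (Suc n)) = 2 ^ Suc (Suc n)"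
    unfolding e using assms by (simp add: coeff_eq_0)
  ultimately show ?thesis by simp
qed

lemma Vp_deg: "degree (Vp n) = n \<and> coeff (Vp n) n = 2 ^ n"
proof (induction n rule: Vp.induct)
  case (3 n) thus ?case unfolding Vp.simps(3) by (intro rec_deg) auto
qed simp_all

lemma Wp_deg: "degree (Wp n) = n \<and> coeff (Wp n) n = 2 ^ n"
proof (induction n rule: Wp.induct)
  case (3 n) thus ?case unfolding Wp.simps(3) by (intro rec_deg) auto
qed simp_all

definition LV :: "real poly \<Rightarrow> real" where
  "LV f = integral {0..pi} (\<lambda>t. poly f (cos t) * (1 + cos t))"
definition LW :: "real poly \<Rightarrow> real" where
  "LW f = integral {0..pi} (\<lambda>t. poly f (cos t) * (1 - cos t))"

lemma int_cos0:
  assumes "j \<ge> 1"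
  shows "((\<lambda>t. cos (real j * t)) has_integral 0) {0..pi}"
proof -
  have j: "real j \<noteq> 0" using assms by simp
  have "((\<lambda>t. cos (real j * t)) has_integral (sin (real j * pi) / real j - sin (real j * 0) / real j)) {0..pi}"
  proof (rule fundamental_theorem_of_calculus)
    show "0 \<le> pi" by simp
    fix x assume "x \<in> {0..pi}"
    have "((\<lambda>t. sin (real j * t) / real j) has_real_derivative (cos (real j * x) * real j / real j)) (at x)"
      by (auto intro!: derivative_eq_intros)
    thus "((\<lambda>t. sin (real j * t) / real j) has_vector_derivative cos (real j * x)) (at x within {0..pi})"
      using j by (simp add: has_real_derivative_iff_has_vector_derivative[symmetric] has_field_derivative_at_within)
  qed
  thus ?thesis by simp
qed

lemma cont_int: "continuous_on {0..pi} f \<Longrightarrow> (f :: real \<Rightarrow> real) integrable_on {0..pi}"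
  by (rule integrable_continuous_real)

lemma contc: "continuous_on (S::real set) (\<lambda>t. poly f (cos t))"
  by (rule continuous_on_poly[OF continuous_on_cos[OF continuous_on_id]])
lemma contV: "continuous_on (S::real set) (\<lambda>t. poly f (cos t) * (1 + cos t))"
  by (intro continuous_intros contc)
lemma contW: "continuous_on (S::real set) (\<lambda>t. poly f (cos t) * (1 - cos t))"
  by (intro continuous_intros contc)

lemma Vp_ne: "Vp n \<noteq> 0"
proof
  assume "Vp n = 0" thus False using Vp_deg[of n] by simp
qed
lemma Wp_ne: "Wp n \<noteq> 0"
proof
  assume "Wp n = 0" thus False using Wp_deg[of n] by simp
qed

lemma lin_LV: "lin LV"
  unfolding lin_def LV_def
proof safe
  fix f g
  show "integral {0..pi} (\<lambda>t. poly (f + g) (cos t) * (1 + cos t)) =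
    integral {0..pi} (\<lambda>t. poly f (cos t) * (1 + cos t)) + integral {0..pi} (\<lambda>t. poly g (cos t) * (1 + cos t))"
    using integral_add[OF cont_int[OF contV[of _ f]] cont_int[OF contV[of _ g]]] by (simp add: distrib_right)
qed (simp add: mult.assoc)

lemma lin_LW: "lin LW"
  unfolding lin_def LW_def
proof safe
  fix f g
  show "integral {0..pi} (\<lambda>t. poly (f + g) (cos t) * (1 - cos t)) =
    integral {0..pi} (\<lambda>t. poly f (cos t) * (1 - cos t)) + integral {0..pi} (\<lambda>t. poly g (cos t) * (1 - cos t))"
    using integral_add[OF cont_int[OF contW[of _ f]] cont_int[OF contW[of _ g]]] by (simp add: distrib_right)
qed (simp add: mult.assoc)

lemma V_prod:
  assumes "k < n"
  shows "poly (Vp n * Vp k) (cos t) * (1 + cos t) = cos (real (n - k) * t) + cos (real (n + k + 1) * t)"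
proof -
  have c: "1 + cos t = 2 * cos (t/2) * cos (t/2)" using cos_double_cos[of "t/2"] by (simp add: power2_eq_square)
  define A where "A = (real n + 1/2) * t"
  define B where "B = (real k + 1/2) * t"
  have "poly (Vp n * Vp k) (cos t) * (1 + cos t) = 2 * (poly (Vp n) (cos t) * cos (t/2)) * (poly (Vp k) (cos t) * cos (t/2))"
    unfolding c by (simp add: algebra_simps)
  also have "\<dots> = 2 * cos A * cos B" unfolding Vp_cos A_def B_def by simp
  also have "\<dots> = cos (A - B) + cos (A + B)" by (simp add: cos_add cos_diff)
  also have "A - B = real (n - k) * t" using assms unfolding A_def B_def by (simp add: of_nat_diff algebra_simps)
  also have "A + B = real (n + k + 1) * t" unfolding A_def B_def by (simp add: algebra_simps)
  finally show ?thesis .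
qed

lemma W_prod:
  assumes "k < n"
  shows "poly (Wp n * Wp k) (cos t) * (1 - cos t) = cos (real (n - k) * t) - cos (real (n + k + 1) * t)"
proof -
  have c: "1 - cos t = 2 * sin (t/2) * sin (t/2)" using cos_double_sin[of "t/2"] by (simp add: power2_eq_square)
  define A where "A = (real n + 1/2) * t"
  define B where "B = (real k + 1/2) * t"
  have "poly (Wp n * Wp k) (cos t) * (1 - cos t) = 2 * (poly (Wp n) (cos t) * sin (t/2)) * (poly (Wp k) (cos t) * sin (t/2))"
    unfolding c by (simp add: algebra_simps)
  also have "\<dots> = 2 * sin A * sin B" unfolding Wp_sin A_def B_def by simp
  also have "\<dots> = cos (A - B) - cos (A + B)" by (simp add: cos_add cos_diff)
  also have "A - B = real (n - k) * t" using assms unfolding A_def B_def by (simp add: of_nat_diff algebra_simps)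
  also have "A + B = real (n + k + 1) * t" unfolding A_def B_def by (simp add: algebra_simps)
  finally show ?thesis .
qed

lemma orthp_V: "orthp LV n (Vp n)"
proof -
  have o: "LV (Vp n * Vp k) = 0" if "k < n" for k
  proof -
    have "((\<lambda>t. cos (real (n - k) * t) + cos (real (n + k + 1) * t)) has_integral 0 + 0) {0..pi}"
      using that by (intro has_integral_add int_cos0) auto
    thus ?thesis unfolding LV_def V_prod[OF that] by (simp add: integral_unique)
  qed
  have "LV (Vp n * q) = 0" if "degree q < n" for q
    by (rule span_orth[of LV n Vp "Vp n" q]) (use lin_LV Vp_deg Vp_ne o that in auto)
  thus ?thesis unfolding orthp_def using Vp_deg by blast
qed

lemma orthp_W: "orthp LW n (Wp n)"
proof -
  have o: "LW (Wp n * Wp k) = 0" if "k < n" for k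
  proof -
    have "((\<lambda>t. cos (real (n - k) * t) - cos (real (n + k + 1) * t)) has_integral 0 - 0) {0..pi}"
      using that by (intro has_integral_diff int_cos0) auto
    thus ?thesis unfolding LW_def W_prod[OF that] by (simp add: integral_unique)
  qed
  have "LW (Wp n * q) = 0" if "degree q < n" for q
    by (rule span_orth[of LW n Wp "Wp n" q]) (use lin_LW Wp_deg Wp_ne o that in auto)
  thus ?thesis unfolding orthp_def using Wp_deg by blast
qed

lemma theta_posd:
  fixes r :: "real \<Rightarrow> real"
  assumes r: "continuous_on UNIV r" "\<And>x. x \<in> {-1..1} \<Longrightarrow> r x \<ge> 0" "\<And>x. x \<in> {-1<..<1} \<Longrightarrow> r x > 0"
    and f: "f \<noteq> 0"
  shows "integral {0..pi} (\<lambda>t. poly (f * f) (cos t) * r (cos t)) > 0"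
proof -
  define h where "h t = poly (f * f) (cos t) * r (cos t)" for t
  have hc: "continuous_on {0..pi} h" unfolding h_def
    by (intro continuous_intros contc continuous_on_compose2[OF r(1)] continuous_on_cos continuous_on_id) auto
  have hnn: "h t \<ge> 0" for t unfolding h_def using r(2)[of "cos t"] by simp
  have ih: "h integrable_on {0..pi}" by (rule cont_int[OF hc])
  have ge: "integral {0..pi} h \<ge> 0" by (rule integral_nonneg[OF ih]) (use hnn in auto)
  have "integral {0..pi} h \<noteq> 0"
  proof
    assume z: "integral {0..pi} h = 0"
    have "poly f x = 0" if x: "x \<in> {-1<..<1}" for x
    proof -
      define t where "t = arccos x"
      have t: "t \<in> {0..pi}" "cos t = x" unfolding t_def using x arccos_bounded[of x] cos_arccos[of x] by auto
      have "h t = 0"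
      proof (rule has_integral_0_cbox_imp_0[of 0 pi h])
        show "continuous_on (cbox 0 pi) h" using hc by simp
        show "\<And>x. x \<in> box 0 pi \<Longrightarrow> 0 \<le> h x" using hnn by auto
        show "(h has_integral 0) (cbox 0 pi)" using ih z by (metis cbox_interval integrable_integral)
        show "box 0 pi \<noteq> {}" by (simp add: box_real pi_gt_zero not_le)
        show "t \<in> cbox 0 pi" using t by simp
      qed
      hence "poly f x * poly f x * r x = 0" unfolding h_def using t by simp
      moreover have "r x > 0" using r(3) x by blast
      ultimately show ?thesis by simp
    qed
    hence "{-1<..<1::real} \<subseteq> {x. poly f x = 0}" by auto
    moreover have "finite {x. poly f x = 0}" using f by (rule poly_roots_finite)
    ultimately have "finite {-1<..<1::real}" by (rule finite_subset)
    thus False using infinite_Ioo[of "-1::real" 1] by simp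
  qed
  thus ?thesis using ge unfolding h_def by simp
qed

lemma posd_LV: "posd LV"
proof -
  have c: "continuous_on UNIV (\<lambda>x::real. 1 + x)" by (intro continuous_intros)
  show ?thesis unfolding posd_def LV_def using theta_posd[OF c] by auto
qed

lemma posd_LW: "posd LW"
proof -
  have c: "continuous_on UNIV (\<lambda>x::real. 1 - x)" by (intro continuous_intros)
  show ?thesis unfolding posd_def LW_def using theta_posd[OF c] by auto
qed

lemma frac_pi_bounds:
  fixes a b :: real
  assumes "0 < a" "a < b"
  shows "0 < a * pi / b \<and> a * pi / b < pi"
proof -
  have ab: "0 < a / b" "a / b < 1" using assms by (auto simp: field_simps)
  have e: "a * pi / b = pi * (a / b)" by simp
  have "0 < pi * (a / b)" by (rule mult_pos_pos[OF pi_gt_zero ab(1)])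
  moreover have "pi * (a / b) < pi * 1" by (rule mult_strict_left_mono[OF ab(2) pi_gt_zero])
  ultimately show ?thesis unfolding e by simp
qed

lemma sorted_roots:
  fixes p :: "real poly" and g :: "nat \<Rightarrow> real"
  assumes p: "p \<noteq> 0" "degree p = n" and mono: "\<And>a b. a < b \<Longrightarrow> b < n \<Longrightarrow> g a < g b"
    and root: "\<And>k. k < n \<Longrightarrow> poly p (g k) = 0"
  shows "card {x. poly p x = 0} = n" "\<And>j. j < n \<Longrightarrow> sorted_list_of_set {x. poly p x = 0} ! j = g j"
proof -
  define R where "R = {x. poly p x = 0}"
  have finR: "finite R" unfolding R_def using p(1) by (rule poly_roots_finite)
  have inj: "inj_on g {..<n}"
  proof (rule inj_onI)
    fix a b assume ab: "a \<in> {..<n}" "b \<in> {..<n}" "g a = g b"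
    show "a = b"
    proof (rule ccontr)
      assume "a \<noteq> b"
      then consider "a < b" | "b < a" by linarith
      thus False using mono ab by cases force+
    qed
  qed
  have cg: "card (g ` {..<n}) = n" using card_image[OF inj] by simp
  have sub: "g ` {..<n} \<subseteq> R" unfolding R_def using root by auto
  have "card R \<le> n" unfolding R_def using card_poly_roots_bound[OF p(1)] p(2) by simp
  hence "card (g ` {..<n}) = card R" using card_mono[OF finR sub] cg by simp
  hence RE: "g ` {..<n} = R" using card_subset_eq[OF finR sub] by simp
  show "card {x. poly p x = 0} = n" using RE cg R_def by simp
  have "sorted_list_of_set R = map g [0..<n]"
  proof -
    have "sorted_wrt (<) (map g [0..<n])"
      unfolding sorted_wrt_iff_nth_less using mono by auto
    moreover have "set (map g [0..<n]) = R" using RE by auto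
    moreover have "length (map g [0..<n]) = card R" using RE cg by simp
    ultimately show ?thesis using sorted_list_of_set_unique[of R "map g [0..<n]"] finR by auto
  qed
  thus "\<And>j. j < n \<Longrightarrow> sorted_list_of_set {x. poly p x = 0} ! j = g j" unfolding R_def by simp
qed

definition gV :: "nat \<Rightarrow> nat \<Rightarrow> real" where
  "gV n k = cos ((2 * (real n - real k) - 1) * pi / (2 * real n + 1))"
definition gW :: "nat \<Rightarrow> nat \<Rightarrow> real" where
  "gW n k = cos (2 * (real n - real k) * pi / (2 * real n + 1))"

lemma V_roots:
  shows "card {x. poly (Vp n) x = 0} = n" "\<And>j. j < n \<Longrightarrow> sorted_list_of_set {x. poly (Vp n) x = 0} ! j = gV n j"
proof -
  define th where "th k = (2 * (real n - real k) - 1) * pi / (2 * real n + 1)" for k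
  have thb: "0 < th k \<and> th k < pi" if "k < n" for k
  proof -
    have "0 < 2 * (real n - real k) - 1" "2 * (real n - real k) - 1 < 2 * real n + 1" using that by auto
    thus ?thesis unfolding th_def by (rule frac_pi_bounds)
  qed
  have mono: "gV n a < gV n b" if "a < b" "b < n" for a b
  proof -
    have "th b < th a" unfolding th_def using that by (simp add: divide_strict_right_mono)
    thus ?thesis unfolding gV_def th_def[symmetric] using thb[of a] thb[of b] that
      by (intro cos_monotone_0_pi) auto
  qed
  have root: "poly (Vp n) (gV n k) = 0" if "k < n" for k
  proof -
    have "poly (Vp n) (cos (th k)) * cos (th k / 2) = cos ((real n + 1/2) * th k)" by (rule Vp_cos)
    also have "(real n + 1/2) * th k = real (n - k) * pi - pi / 2"
      unfolding th_def using that by (simp add: of_nat_diff field_simps)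
    also have "cos \<dots> = 0" by (simp add: cos_diff)
    finally have "poly (Vp n) (cos (th k)) * cos (th k / 2) = 0" .
    moreover have "cos (th k / 2) > 0" using thb[OF that] by (intro cos_gt_zero_pi) auto
    ultimately show ?thesis unfolding gV_def th_def by simp
  qed
  show "card {x. poly (Vp n) x = 0} = n" "\<And>j. j < n \<Longrightarrow> sorted_list_of_set {x. poly (Vp n) x = 0} ! j = gV n j"
    using sorted_roots[OF Vp_ne _ mono root] Vp_deg by auto
qed

lemma W_roots:
  shows "card {x. poly (Wp n) x = 0} = n" "\<And>j. j < n \<Longrightarrow> sorted_list_of_set {x. poly (Wp n) x = 0} ! j = gW n j"
proof -
  define th where "th k = 2 * (real n - real k) * pi / (2 * real n + 1)" for k
  have thb: "0 < th k \<and> th k < pi" if "k < n" for k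
  proof -
    have "0 < 2 * (real n - real k)" "2 * (real n - real k) < 2 * real n + 1" using that by auto
    thus ?thesis unfolding th_def by (rule frac_pi_bounds)
  qed
  have mono: "gW n a < gW n b" if "a < b" "b < n" for a b
  proof -
    have "th b < th a" unfolding th_def using that by (simp add: divide_strict_right_mono)
    thus ?thesis unfolding gW_def th_def[symmetric] using thb[of a] thb[of b] that
      by (intro cos_monotone_0_pi) auto
  qed
  have root: "poly (Wp n) (gW n k) = 0" if "k < n" for k
  proof -
    have "poly (Wp n) (cos (th k)) * sin (th k / 2) = sin ((real n + 1/2) * th k)" by (rule Wp_sin)
    also have "(real n + 1/2) * th k = real (n - k) * pi"
      unfolding th_def using that by (simp add: of_nat_diff field_simps)
    also have "sin \<dots> = 0" by simp
    finally have "poly (Wp n) (cos (th k)) * sin (th k / 2) = 0" .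
    moreover have "sin (th k / 2) > 0" using thb[OF that] by (intro sin_gt_zero) auto
    ultimately show ?thesis unfolding gW_def th_def by simp
  qed
  show "card {x. poly (Wp n) x = 0} = n" "\<And>j. j < n \<Longrightarrow> sorted_list_of_set {x. poly (Wp n) x = 0} ! j = gW n j"
    using sorted_roots[OF Wp_ne _ mono root] Wp_deg by auto
qed

lemma Lu_theta: "Lw (\<lambda>_. 1) p = integral {0..pi} (\<lambda>t. poly p (cos t) * sin t)"
proof -
  have "((\<lambda>x. sin x *\<^sub>R poly p (- (- cos x))) has_integral
        integral {- cos 0 .. - cos pi} (\<lambda>x. poly p (- x))) {0..pi}"
  proof (rule has_integral_substitution[where c = "-1" and d = 1])
    show "0 \<le> pi" by simp
    show "- cos 0 \<le> - cos pi" by simp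
    show "(\<lambda>x. - cos x) ` {0..pi} \<subseteq> {-1..1}" by auto
    show "continuous_on {-1..1} (\<lambda>x. poly p (- x))" by (intro continuous_intros pcont)
    fix x assume "x \<in> {0..pi}"
    show "((\<lambda>x. - cos x) has_field_derivative sin x) (at x within {0..pi})"
      by (auto intro!: derivative_eq_intros)
  qed
  hence h: "((\<lambda>t. poly p (cos t) * sin t) has_integral integral {-1..1} (\<lambda>x. poly p (- x))) {0..pi}"
    by (simp add: mult.commute)
  have ip: "(poly p has_integral integral {-1..1} (poly p)) {-1..1}"
    by (rule integrable_integral) (rule integrable_continuous_real[OF pcont])
  hence "((\<lambda>x. poly p (- x)) has_integral integral {-1..1} (poly p)) {-1..1}"
    using has_integral_reflect_real[of "poly p" "integral {-1..1} (poly p)" 1 "-1"] by simp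
  hence "integral {-1..1} (\<lambda>x. poly p (- x)) = integral {-1..1} (poly p)" by (rule integral_unique)
  thus ?thesis using integral_unique[OF h] Lu_eq by simp
qed

lemma cheb:
  fixes a d1 d2 :: "real \<Rightarrow> real"
  assumes ca: "continuous_on {0..pi} a" and c1: "continuous_on {0..pi} d1" and c2: "continuous_on {0..pi} d2"
    and D: "integral {0..pi} d2 > 0" and beta: "\<beta> * integral {0..pi} d2 = integral {0..pi} d1"
    and pw: "\<And>t. t \<in> {0..pi} \<Longrightarrow> (a t - \<alpha>) * (d1 t - \<beta> * d2 t) \<ge> 0"
  shows "integral {0..pi} (\<lambda>t. a t * d2 t) * integral {0..pi} d1
          \<le> integral {0..pi} (\<lambda>t. a t * d1 t) * integral {0..pi} d2"
proof -
  define A where "A = integral {0..pi} (\<lambda>t. a t * d1 t)"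
  define B where "B = integral {0..pi} d1"
  define C where "C = integral {0..pi} (\<lambda>t. a t * d2 t)"
  define D' where "D' = integral {0..pi} d2"
  have hA: "((\<lambda>t. a t * d1 t) has_integral A) {0..pi}" unfolding A_def
    by (intro integrable_integral integrable_continuous_real continuous_intros ca c1)
  have hC: "((\<lambda>t. a t * d2 t) has_integral C) {0..pi}" unfolding C_def
    by (intro integrable_integral integrable_continuous_real continuous_intros ca c2)
  have hB: "(d1 has_integral B) {0..pi}" unfolding B_def
    by (intro integrable_integral integrable_continuous_real c1)
  have hD: "(d2 has_integral D') {0..pi}" unfolding D'_def
    by (intro integrable_integral integrable_continuous_real c2)
  have "((\<lambda>t. (a t * d1 t - \<beta> * (a t * d2 t)) - (\<alpha> * d1 t - (\<alpha> * \<beta>) * d2 t)) has_integral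
           (A - \<beta> * C) - (\<alpha> * B - (\<alpha> * \<beta>) * D')) {0..pi}"
    by (intro has_integral_diff has_integral_mult_right hA hB hC hD)
  moreover have "(a t * d1 t - \<beta> * (a t * d2 t)) - (\<alpha> * d1 t - (\<alpha> * \<beta>) * d2 t)
        = (a t - \<alpha>) * (d1 t - \<beta> * d2 t)" for t by (simp add: algebra_simps)
  ultimately have "((\<lambda>t. (a t - \<alpha>) * (d1 t - \<beta> * d2 t)) has_integral
           (A - \<beta> * C) - (\<alpha> * B - (\<alpha> * \<beta>) * D')) {0..pi}" by simp
  hence "0 \<le> (A - \<beta> * C) - (\<alpha> * B - (\<alpha> * \<beta>) * D')"
    by (rule has_integral_nonneg) (use pw in auto)
  hence h0: "0 \<le> A - \<beta> * C - \<alpha> * B + \<alpha> * (\<beta> * D')" by (simp add: algebra_simps)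
  have "\<beta> * D' = B" using beta unfolding D'_def B_def .
  hence "\<beta> * C \<le> A" using h0 by simp
  hence "\<beta> * C * D' \<le> A * D'" using D unfolding D'_def by (simp add: mult_right_mono)
  hence "C * B \<le> A * D'" using \<open>\<beta> * D' = B\<close> by (simp add: algebra_simps)
  thus ?thesis unfolding A_def B_def C_def D'_def .
qed

lemma alg_V:
  fixes s c b :: real
  assumes "0 \<le> s" "0 \<le> c" "0 \<le> b" "s^2 + c^2 = 1"
  shows "(2 * s^2 - 2 * b^2 / (1 + b^2)) * (2 * s * c - b * (2 * c^2)) \<ge> 0"
proof -
  have bp: "1 + b^2 > 0" by (simp add: add_pos_nonneg)
  have "s^2 * (1 + b^2) - b^2 = (s - b * c) * (s + b * c)"
    using assms(4) by (simp add: algebra_simps power2_eq_square) algebra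
  hence e1: "2 * s^2 - 2 * b^2 / (1 + b^2) = 2 * (s - b * c) * (s + b * c) / (1 + b^2)"
    using bp by (simp add: field_simps)
  have e2: "(2 * s * c - b * (2 * c^2)) = 2 * c * (s - b * c)" by (simp add: algebra_simps power2_eq_square)
  have e3: "(2 * (s - b * c) * (s + b * c) / (1 + b^2)) * (2 * c * (s - b * c))
      = (4 * c * (s + b * c) / (1 + b^2)) * (s - b * c)^2"
    by (simp add: power2_eq_square algebra_simps)
  show ?thesis unfolding e1 e2 e3 using assms bp by (intro mult_nonneg_nonneg divide_nonneg_pos) auto
qed

lemma alg_W:
  fixes s c b :: real
  assumes "0 \<le> s" "0 \<le> c" "0 \<le> b" "s^2 + c^2 = 1"
  shows "(2 * s^2 - 2 * b^2 / (1 + b^2)) * (2 * s^2 - b * (2 * s * c)) \<ge> 0"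
proof -
  have bp: "1 + b^2 > 0" by (simp add: add_pos_nonneg)
  have "s^2 * (1 + b^2) - b^2 = (s - b * c) * (s + b * c)"
    using assms(4) by (simp add: algebra_simps power2_eq_square) algebra
  hence e1: "2 * s^2 - 2 * b^2 / (1 + b^2) = 2 * (s - b * c) * (s + b * c) / (1 + b^2)"
    using bp by (simp add: field_simps)
  have e2: "(2 * s^2 - b * (2 * s * c)) = 2 * s * (s - b * c)" by (simp add: algebra_simps power2_eq_square)
  have e3: "(2 * (s - b * c) * (s + b * c) / (1 + b^2)) * (2 * s * (s - b * c))
      = (4 * s * (s + b * c) / (1 + b^2)) * (s - b * c)^2"
    by (simp add: power2_eq_square algebra_simps)
  show ?thesis unfolding e1 e2 e3 using assms bp by (intro mult_nonneg_nonneg divide_nonneg_pos) auto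
qed

lemma half_angle:
  assumes "t \<in> {0..pi}"
  shows "cos t = 1 - 2 * sin (t/2)^2" "sin t = 2 * sin (t/2) * cos (t/2)" "1 + cos t = 2 * cos (t/2)^2"
    "sin (t/2) \<ge> 0" "cos (t/2) \<ge> 0" "sin (t/2)^2 + cos (t/2)^2 = 1"
proof -
  show "cos t = 1 - 2 * sin (t/2)^2" using cos_double_sin[of "t/2"] by simp
  show "sin t = 2 * sin (t/2) * cos (t/2)" using sin_double[of "t/2"] by simp
  show "1 + cos t = 2 * cos (t/2)^2" using cos_double_cos[of "t/2"] by simp
  show "sin (t/2) \<ge> 0" using assms by (intro sin_ge_zero) auto
  show "cos (t/2) \<ge> 0" using assms by (intro cos_ge_zero) auto
  show "sin (t/2)^2 + cos (t/2)^2 = 1" by simp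
qed

lemma cont_F: "continuous_on {0..pi} (\<lambda>t. poly p (cos t) * g t)" if "continuous_on {0..pi} g" for g
  by (intro continuous_intros contc that)

lemma hypV:
  assumes q: "q \<noteq> 0"
  shows "1 * LV ([:1,-1:] * q * q) * Lw (\<lambda>_. 1) (q * q) \<le> Lw (\<lambda>_. 1) ([:1,-1:] * q * q) * LV (q * q)"
proof -
  define F where "F t = poly (q * q) (cos t)" for t
  define d1 where "d1 t = F t * sin t" for t
  define d2 where "d2 t = F t * (1 + cos t)" for t
  define a where "a t = 1 - cos t" for t :: real
  have Fn: "F t \<ge> 0" for t unfolding F_def by simp
  have pa: "poly ([:1,-1:] * q * q) (cos t) = a t * F t" for t unfolding a_def F_def by (simp add: algebra_simps)
  have E1: "Lw (\<lambda>_. 1) (q * q) = integral {0..pi} d1" unfolding Lu_theta d1_def F_def ..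
  have E2: "Lw (\<lambda>_. 1) ([:1,-1:] * q * q) = integral {0..pi} (\<lambda>t. a t * d1 t)"
    unfolding Lu_theta d1_def pa by (simp add: mult.assoc)
  have E3: "LV (q * q) = integral {0..pi} d2" unfolding LV_def d2_def F_def ..
  have E4: "LV ([:1,-1:] * q * q) = integral {0..pi} (\<lambda>t. a t * d2 t)"
    unfolding LV_def d2_def pa by (simp add: mult.assoc)
  have Bp: "integral {0..pi} d1 > 0" using bw_facts(2)[OF u_bw] q unfolding posd_def E1[symmetric] by blast
  have Dp: "integral {0..pi} d2 > 0" using posd_LV q unfolding posd_def E3[symmetric] by blast
  define \<beta> where "\<beta> = integral {0..pi} d1 / integral {0..pi} d2"
  have b0: "\<beta> \<ge> 0" unfolding \<beta>_def using Bp Dp by simp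
  have "integral {0..pi} (\<lambda>t. a t * d2 t) * integral {0..pi} d1
          \<le> integral {0..pi} (\<lambda>t. a t * d1 t) * integral {0..pi} d2"
  proof (rule cheb[where \<beta> = \<beta> and \<alpha> = "2 * \<beta>^2 / (1 + \<beta>^2)"])
    show "continuous_on {0..pi} a" unfolding a_def by (intro continuous_intros)
    show "continuous_on {0..pi} d1" unfolding d1_def F_def by (intro cont_F continuous_intros)
    show "continuous_on {0..pi} d2" unfolding d2_def F_def by (intro cont_F continuous_intros)
    show "integral {0..pi} d2 > 0" by (rule Dp)
    show "\<beta> * integral {0..pi} d2 = integral {0..pi} d1" unfolding \<beta>_def using Dp by simp
    fix t :: real assume t: "t \<in> {0..pi}"
    note h = half_angle[OF t]
    define al where "al = 2 * \<beta>^2 / (1 + \<beta>^2)"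
    define sn where "sn = sin (t/2)"
    define cs where "cs = cos (t/2)"
    have ct: "cos t = 1 - 2 * sn^2" unfolding sn_def by (rule h(1))
    have st: "sin t = 2 * sn * cs" unfolding sn_def cs_def by (rule h(2))
    have sc: "sn^2 + cs^2 = 1" unfolding sn_def cs_def by (rule h(6))
    have "(a t - 2 * \<beta>^2 / (1 + \<beta>^2)) * (d1 t - \<beta> * d2 t)
       = F t * ((2 * sin (t/2)^2 - 2 * \<beta>^2 / (1 + \<beta>^2)) * (2 * sin (t/2) * cos (t/2) - \<beta> * (2 * cos (t/2)^2)))"
      unfolding al_def[symmetric] sn_def[symmetric] cs_def[symmetric] a_def d1_def d2_def ct st
      using sc by algebra
    also have "\<dots> \<ge> 0" using Fn alg_V[OF h(4) h(5) b0 h(6)] by simp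
    finally show "(a t - 2 * \<beta>^2 / (1 + \<beta>^2)) * (d1 t - \<beta> * d2 t) \<ge> 0" .
  qed
  thus ?thesis unfolding E1 E2 E3 E4 by simp
qed

lemma hypW:
  assumes q: "q \<noteq> 0"
  shows "1 * Lw (\<lambda>_. 1) ([:1,-1:] * q * q) * LW (q * q) \<le> LW ([:1,-1:] * q * q) * Lw (\<lambda>_. 1) (q * q)"
proof -
  define F where "F t = poly (q * q) (cos t)" for t
  define d1 where "d1 t = F t * (1 - cos t)" for t
  define d2 where "d2 t = F t * sin t" for t
  define a where "a t = 1 - cos t" for t :: real
  have Fn: "F t \<ge> 0" for t unfolding F_def by simp
  have pa: "poly ([:1,-1:] * q * q) (cos t) = a t * F t" for t unfolding a_def F_def by (simp add: algebra_simps)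
  have E1: "LW (q * q) = integral {0..pi} d1" unfolding LW_def d1_def F_def ..
  have E2: "LW ([:1,-1:] * q * q) = integral {0..pi} (\<lambda>t. a t * d1 t)"
    unfolding LW_def d1_def pa by (simp add: mult.assoc)
  have E3: "Lw (\<lambda>_. 1) (q * q) = integral {0..pi} d2" unfolding Lu_theta d2_def F_def ..
  have E4: "Lw (\<lambda>_. 1) ([:1,-1:] * q * q) = integral {0..pi} (\<lambda>t. a t * d2 t)"
    unfolding Lu_theta d2_def pa by (simp add: mult.assoc)
  have Bp: "integral {0..pi} d1 > 0" using posd_LW q unfolding posd_def E1[symmetric] by blast
  have Dp: "integral {0..pi} d2 > 0" using bw_facts(2)[OF u_bw] q unfolding posd_def E3[symmetric] by blast
  define \<beta> where "\<beta> = integral {0..pi} d1 / integral {0..pi} d2"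
  have b0: "\<beta> \<ge> 0" unfolding \<beta>_def using Bp Dp by simp
  have "integral {0..pi} (\<lambda>t. a t * d2 t) * integral {0..pi} d1
          \<le> integral {0..pi} (\<lambda>t. a t * d1 t) * integral {0..pi} d2"
  proof (rule cheb[where \<beta> = \<beta> and \<alpha> = "2 * \<beta>^2 / (1 + \<beta>^2)"])
    show "continuous_on {0..pi} a" unfolding a_def by (intro continuous_intros)
    show "continuous_on {0..pi} d1" unfolding d1_def F_def by (intro cont_F continuous_intros)
    show "continuous_on {0..pi} d2" unfolding d2_def F_def by (intro cont_F continuous_intros)
    show "integral {0..pi} d2 > 0" by (rule Dp)
    show "\<beta> * integral {0..pi} d2 = integral {0..pi} d1" unfolding \<beta>_def using Dp by simp
    fix t :: real assume t: "t \<in> {0..pi}"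
    note h = half_angle[OF t]
    define al where "al = 2 * \<beta>^2 / (1 + \<beta>^2)"
    define sn where "sn = sin (t/2)"
    define cs where "cs = cos (t/2)"
    have ct: "cos t = 1 - 2 * sn^2" unfolding sn_def by (rule h(1))
    have st: "sin t = 2 * sn * cs" unfolding sn_def cs_def by (rule h(2))
    have sc: "sn^2 + cs^2 = 1" unfolding sn_def cs_def by (rule h(6))
    have "(a t - 2 * \<beta>^2 / (1 + \<beta>^2)) * (d1 t - \<beta> * d2 t)
       = F t * ((2 * sin (t/2)^2 - 2 * \<beta>^2 / (1 + \<beta>^2)) * (2 * sin (t/2)^2 - \<beta> * (2 * sin (t/2) * cos (t/2))))"
      unfolding al_def[symmetric] sn_def[symmetric] cs_def[symmetric] a_def d1_def d2_def ct st
      by (simp add: algebra_simps)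
    also have "\<dots> \<ge> 0" using Fn alg_W[OF h(4) h(5) b0 h(6)] by simp
    finally show "(a t - 2 * \<beta>^2 / (1 + \<beta>^2)) * (d1 t - \<beta> * d2 t) \<ge> 0" .
  qed
  thus ?thesis unfolding E1 E2 E3 E4 by simp
qed

lemma sandwich:
  assumes i: "1 \<le> i" "i \<le> n"
  shows "gW n (i - 1) \<le> xi (\<lambda>_. 1) n i \<and> xi (\<lambda>_. 1) n i \<le> gV n (i - 1)"
proof -
  note U = bw_facts(1,2)[OF u_bw] bw_facts(3-6)[OF u_bw, of n]
  have i1: "i - 1 < n" using i by simp
  have c1: "(1::real) \<ge> 0" by simp
  have a: "1 * (1 - sorted_list_of_set {x. poly (Vp n) x = 0} ! (i - 1))
      \<le> 1 - sorted_list_of_set {x. poly (gs (Lw (\<lambda>_. 1)) n) x = 0} ! (i - 1)"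
    by (rule compare_minus[OF U(1-5) lin_LV posd_LV orthp_V Vp_ne V_roots(1) i c1])
      (rule hypV)
  have b: "1 * (1 - sorted_list_of_set {x. poly (gs (Lw (\<lambda>_. 1)) n) x = 0} ! (i - 1))
      \<le> 1 - sorted_list_of_set {x. poly (Wp n) x = 0} ! (i - 1)"
    by (rule compare_minus[OF lin_LW posd_LW orthp_W Wp_ne W_roots(1) U(1-5) i c1])
      (rule hypW)
  show ?thesis using a b V_roots(2)[OF i1] W_roots(2)[OF i1] bw_xi[OF u_bw] by simp
qed

lemma one_minus_cos_le: "1 - cos x \<le> (x::real)^2 / 2"
proof -
  have "1 - cos x = 2 * sin (x/2)^2" using cos_double_sin[of "x/2"] by simp
  also have "sin (x/2)^2 \<le> (x/2)^2"
    using power_mono[OF abs_sin_x_le_abs_x[of "x/2"] abs_ge_zero, of 2] by (simp add: power_divide)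
  finally show ?thesis by (simp add: power2_eq_square)
qed

lemma sin_lower: fixes y :: real assumes "0 \<le> y" shows "y - y^3 / 6 \<le> sin y"
proof -
  define g where "g y = sin y - y + y^3 / 6" for y :: real
  have "g 0 \<le> g y"
  proof (rule deriv_nonneg_imp_mono[where g = g and a = 0 and b = y and g' = "\<lambda>y. cos y - 1 + y^2 / 2"])
    fix x :: real assume "x \<in> {0..y}"
    show "(g has_real_derivative cos x - 1 + x^2 / 2) (at x)"
      unfolding g_def by (auto intro!: derivative_eq_intros simp: power2_eq_square power3_eq_cube)
    show "cos x - 1 + x^2 / 2 \<ge> 0" using one_minus_cos_le[of x] by simp
  qed (use assms in simp)
  thus ?thesis unfolding g_def by simp
qed

lemma one_minus_cos_ge: fixes x :: real assumes "0 \<le> x" "x \<le> pi" shows "x^2 / 18 \<le> 1 - cos x"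
proof -
  define y where "y = x / 2"
  have y: "0 \<le> y" "y \<le> 2" using assms pi_less_4 unfolding y_def by auto
  have "y / 3 \<le> y - y^3 / 6"
  proof -
    have "y * y \<le> 2 * 2" using mult_mono[OF y(2) y(2)] y by simp
    hence "y^2 \<le> 4" by (simp add: power2_eq_square)
    hence "y * y^2 \<le> y * 4" using y by (simp add: mult_left_mono)
    thus ?thesis by (simp add: power3_eq_cube power2_eq_square)
  qed
  also have "\<dots> \<le> sin y" by (rule sin_lower[OF y(1)])
  finally have sy: "y / 3 \<le> sin y" .
  have "(y / 3)^2 \<le> sin y ^ 2" using sy y by (intro power_mono) auto
  moreover have "1 - cos x = 2 * sin y ^ 2" using cos_double_sin[of y] unfolding y_def by simp
  ultimately show ?thesis unfolding y_def by (simp add: power2_eq_square)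
qed

lemma low_bound:
  assumes "1 \<le> j" "j \<le> n"
  shows "(real j / real n)^2 / 18 \<le> 1 - cos ((2 * real j - 1) * pi / (2 * real n + 1))"
proof -
  define x where "x = (2 * real j - 1) * pi / (2 * real n + 1)"
  have n: "real n \<ge> 1" using assms by simp
  have x0: "0 \<le> x" unfolding x_def using assms by simp
  have "(2 * real j - 1) / (2 * real n + 1) \<le> 1" using assms by simp
  hence "pi * ((2 * real j - 1) / (2 * real n + 1)) \<le> pi * 1"
    using pi_gt_zero by (intro mult_left_mono) auto
  hence xpi: "x \<le> pi" unfolding x_def by (simp add: mult.commute)
  have r: "real j / real n \<le> 3 * ((2 * real j - 1) / (2 * real n + 1))"
  proof -
    have "real j * (2 * real n + 1) \<le> 3 * (2 * real j - 1) * real n"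
    proof -
      have j1: "real j \<ge> 1" using assms by simp
      have "real j * 1 \<le> real j * real n" using n by (intro mult_left_mono) auto
      moreover have "1 * real n \<le> real j * real n" using j1 by (intro mult_right_mono) auto
      ultimately have "real j + 3 * real n \<le> 4 * real j * real n" by simp
      thus ?thesis by (simp add: algebra_simps)
    qed
    thus ?thesis using n by (simp add: field_simps)
  qed
  also have "\<dots> \<le> pi * ((2 * real j - 1) / (2 * real n + 1))"
    using pi_gt3 assms by (intro mult_right_mono) auto
  also have "\<dots> = x" unfolding x_def by simp
  finally have "real j / real n \<le> x" .
  hence "(real j / real n)^2 \<le> x^2" by (intro power_mono) auto
  hence "(real j / real n)^2 / 18 \<le> x^2 / 18" by simp
  also have "\<dots> \<le> 1 - cos x" by (rule one_minus_cos_ge[OF x0 xpi])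
  finally show ?thesis unfolding x_def .
qed

lemma up_bound:
  assumes "1 \<le> n"
  shows "1 - cos (2 * real j * pi / (2 * real n + 1)) \<le> 8 * (real j / real n)^2"
proof -
  define x where "x = 2 * real j * pi / (2 * real n + 1)"
  have n: "real n \<ge> 1" using assms by simp
  have x0: "0 \<le> x" unfolding x_def by simp
  have "x \<le> 2 * real j * pi / (2 * real n)" unfolding x_def using n
    by (intro divide_left_mono) auto
  also have "\<dots> = pi * (real j / real n)" by simp
  also have "\<dots> \<le> 4 * (real j / real n)" using pi_less_4 by (intro mult_right_mono) auto
  finally have "x \<le> 4 * (real j / real n)" .
  hence "x^2 \<le> (4 * (real j / real n))^2" using x0 by (intro power_mono) auto
  also have "(4 * (real j / real n))^2 = 16 * (real j / real n)^2" by (simp add: power2_eq_square)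
  finally have "x^2 / 2 \<le> 8 * (real j / real n)^2" by simp
  with one_minus_cos_le[of x] show ?thesis unfolding x_def by simp
qed

lemma sq_low:
  fixes m M X Y r :: real
  assumes "0 < m" "m \<le> M" "m / M * Y \<le> X" "r^2 / 18 \<le> Y" "0 \<le> r"
  shows "1/5 * sqrt (m / M) * r \<le> sqrt X"
proof (rule real_le_rsqrt)
  have q: "0 \<le> m / M" using assms by simp
  have "(1/5 * sqrt (m / M) * r)^2 = m / M * (r^2 / 25)"
    using real_sqrt_pow2[OF q] by (simp add: power_mult_distrib power_divide)
  also have "\<dots> \<le> m / M * (r^2 / 18)" using q by (intro mult_left_mono) auto
  also have "\<dots> \<le> m / M * Y" using q assms by (intro mult_left_mono) auto
  also have "\<dots> \<le> X" by fact
  finally show "(1/5 * sqrt (m / M) * r)^2 \<le> X" .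
qed

lemma sq_up:
  fixes m M X Y r :: real
  assumes "0 < m" "m \<le> M" "X \<le> M / m * Y" "Y \<le> 8 * r^2" "0 \<le> r"
  shows "sqrt X \<le> 3 * sqrt (M / m) * r"
proof (rule real_le_lsqrt)
  have q: "0 \<le> M / m" using assms by simp
  show "0 \<le> 3 * sqrt (M / m) * r" using q assms by simp
  have "X \<le> M / m * Y" by fact
  also have "\<dots> \<le> M / m * (8 * r^2)" using q assms by (intro mult_left_mono) auto
  also have "\<dots> \<le> M / m * (9 * r^2)" using q by (intro mult_left_mono) auto
  also have "\<dots> = (3 * sqrt (M / m) * r)^2"
    using real_sqrt_pow2[OF q] by (simp add: power_mult_distrib)
  finally show "X \<le> (3 * sqrt (M / m) * r)^2" .
qed

lemma part2:
  assumes bw: "bounded_weight w m M" and i: "1 \<le> i" "i \<le> n"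
  shows "1/5 * sqrt (m / M) * (real (n + 1 - i) / real n) \<le> sqrt (1 - xi w n i) \<and>
         sqrt (1 - xi w n i) \<le> 3 * sqrt (M / m) * (real (n + 1 - i) / real n) \<and>
         1/5 * sqrt (m / M) * (real i / real n) \<le> sqrt (1 + xi w n i) \<and>
         sqrt (1 + xi w n i) \<le> 3 * sqrt (M / m) * (real i / real n)"
proof -
  define k where "k = n + 1 - i"
  have kr: "real k = real n + 1 - real i" unfolding k_def using i by (simp add: of_nat_diff)
  have k: "1 \<le> k" "k \<le> n" unfolding k_def using i by auto
  have n: "1 \<le> n" using i by simp
  define su where "su = xi (\<lambda>_. 1) n i"
  define x1 where "x1 = (2 * real k - 1) * pi / (2 * real n + 1)"
  define x2 where "x2 = 2 * real k * pi / (2 * real n + 1)"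
  have a: "real n - real (i - 1) = real k" using kr i by (simp add: of_nat_diff)
  have e1: "gV n (i - 1) = cos x1" unfolding gV_def x1_def a ..
  have e2: "gW n (i - 1) = cos x2" unfolding gW_def x2_def a ..
  have S: "cos x2 \<le> su" "su \<le> cos x1" using sandwich[OF i] e1 e2 unfolding su_def by auto
  have p1: "pi - x1 = 2 * real i * pi / (2 * real n + 1)" unfolding x1_def kr by (simp add: field_simps)
  have p2: "pi - x2 = (2 * real i - 1) * pi / (2 * real n + 1)" unfolding x2_def kr by (simp add: field_simps)
  have Y1l: "(real k / real n)^2 / 18 \<le> 1 - su" using low_bound[OF k] S unfolding x1_def by simp
  have Y1u: "1 - su \<le> 8 * (real k / real n)^2" using up_bound[OF n, of k] S unfolding x2_def by simp
  have Y2l: "(real i / real n)^2 / 18 \<le> 1 + su"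
    using low_bound[OF i] S p2 cos_pi_minus[of x2] by simp
  have Y2u: "1 + su \<le> 8 * (real i / real n)^2"
    using up_bound[OF n, of i] S p1 cos_pi_minus[of x1] by simp
  have mM: "0 < m" "m \<le> M" using bw_mM[OF bw] by auto
  note P = part1[OF bw i, folded su_def]
  show ?thesis unfolding k_def[symmetric]
    using sq_low[OF mM _ Y1l] sq_up[OF mM _ Y1u] sq_low[OF mM _ Y2l] sq_up[OF mM _ Y2u] P by simp
qed

theorem corollary3p5:
  shows "(\<forall>w m M. bounded_weight w m M \<longrightarrow>
            (\<forall>n i. 1 \<le> n \<and> 1 \<le> i \<and> i \<le> n \<longrightarrow>
               m / M * (1 - xi (\<lambda>_. 1) n i) \<le> 1 - xi w n i \<and>
               1 - xi w n i \<le> M / m * (1 - xi (\<lambda>_. 1) n i) \<and>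
               m / M * (1 + xi (\<lambda>_. 1) n i) \<le> 1 + xi w n i \<and>
               1 + xi w n i \<le> M / m * (1 + xi (\<lambda>_. 1) n i)))
       \<and> (\<exists>C c::real. C > 0 \<and> c > 0 \<and>
            (\<forall>w m M. bounded_weight w m M \<longrightarrow>
              (\<forall>n i. 1 \<le> n \<and> 1 \<le> i \<and> i \<le> n \<longrightarrow>
                 c * sqrt (m / M) * (real (n + 1 - i) / real n) \<le> sqrt (1 - xi w n i) \<and>
                 sqrt (1 - xi w n i) \<le> C * sqrt (M / m) * (real (n + 1 - i) / real n) \<and>
                 c * sqrt (m / M) * (real i / real n) \<le> sqrt (1 + xi w n i) \<and>
                 sqrt (1 + xi w n i) \<le> C * sqrt (M / m) * (real i / real n))))"
proof (intro conjI)
  show "\<forall>w m M. bounded_weight w m M \<longrightarrow>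
            (\<forall>n i. 1 \<le> n \<and> 1 \<le> i \<and> i \<le> n \<longrightarrow>
               m / M * (1 - xi (\<lambda>_. 1) n i) \<le> 1 - xi w n i \<and>
               1 - xi w n i \<le> M / m * (1 - xi (\<lambda>_. 1) n i) \<and>
               m / M * (1 + xi (\<lambda>_. 1) n i) \<le> 1 + xi w n i \<and>
               1 + xi w n i \<le> M / m * (1 + xi (\<lambda>_. 1) n i))"
    using part1 by blast
  show "\<exists>C c::real. C > 0 \<and> c > 0 \<and>
            (\<forall>w m M. bounded_weight w m M \<longrightarrow>
              (\<forall>n i. 1 \<le> n \<and> 1 \<le> i \<and> i \<le> n \<longrightarrow>
                 c * sqrt (m / M) * (real (n + 1 - i) / real n) \<le> sqrt (1 - xi w n i) \<and>
                 sqrt (1 - xi w n i) \<le> C * sqrt (M / m) * (real (n + 1 - i) / real n) \<and>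
                 c * sqrt (m / M) * (real i / real n) \<le> sqrt (1 + xi w n i) \<and>
                 sqrt (1 + xi w n i) \<le> C * sqrt (M / m) * (real i / real n)))"
    by (rule exI[of _ 3], rule exI[of _ "1/5"]) (use part2 in auto)
qed

end
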